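(* Let $f\in C^1_b(\mathbb{R})\cap C^2(\mathbb{R})$ and $0<\gamma\le\beta\le\alpha$. Set $X=C^{2,\beta}(\mathbb{T}^d)\times C^{2,\gamma}(\mathbb{T}^d)$ and $Z=C^{0,\alpha}(\mathbb{T}^d)\times C^{0,\beta}(\mathbb{T}^d)$. Then the mapping $G\colon X\to Z$, $G(v,\rho)=(\tfrac12|Dv|^2-f(\rho),-\operatorname{div}(\rho Dv)-\lambda m_0)$, is continuously differentiable and for every $(u,m)\in X$, $dG[u,m](v,\rho)=\big(Du\cdot Dv - f'(m)\rho,\ -\operatorname{div}(\rho Du)-\operatorname{div}(mDv)\big)$. Furthermore, if $f\in C^{2,1}_{\mathrm{loc}}(\mathbb{R})$, then $dG$ is locally Lipschitz continuous (as a map $X\to\mathcal{L}(X,Z)$).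
   Context: $\mathbb{T}^d$ is the flat torus, $\lambda>0$, $\alpha\in(0,1)$, $m_0\in C^{0,\alpha}(\mathbb{T}^d)$ a probability density. $C^1_b(\mathbb{R})$: $C^1$ functions with $f,f'$ bounded; $C^{2,1}_{\mathrm{loc}}(\mathbb{R})$: $C^2$ functions with $f''$ Lipschitz on bounded sets. $C^{k,\beta}(\mathbb{T}^d)$ are the usual Hölder spaces. *)

theory Defs
  imports "HOL-Analysis.Analysis"
begin

text \<open>Functions on the flat torus T^d = R^d / Z^d are represented as Z^d-periodic
functions on R^d (the index type 'd is finite, d = CARD('d)).\<close>

definition periodic :: "(real^('d::finite) \<Rightarrow> 'b) \<Rightarrow> bool" where
  "periodic g \<longleftrightarrow> (\<forall>x i. g (x + axis i 1) = g x)"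

definition holder :: "real \<Rightarrow> (real^('d::finite) \<Rightarrow> 'b::real_normed_vector) \<Rightarrow> bool" where
  "holder a g \<longleftrightarrow> (\<exists>C. \<forall>x y. norm (g x - g y) \<le> C * dist x y powr a)"

definition holder_seminorm :: "real \<Rightarrow> (real^('d::finite) \<Rightarrow> 'b::real_normed_vector) \<Rightarrow> real" where
  "holder_seminorm a g = (SUP p \<in> {(x,y). x \<noteq> y}. norm (g (fst p) - g (snd p)) / dist (fst p) (snd p) powr a)"

definition supnorm :: "(real^('d::finite) \<Rightarrow> 'b::real_normed_vector) \<Rightarrow> real" where
  "supnorm g = (SUP x. norm (g x))"

definition grad :: "(real^('d::finite) \<Rightarrow> real) \<Rightarrow> real^('d::finite) \<Rightarrow> real^('d::finite)" where
  "grad u x = (\<chi> i. frechet_derivative u (at x) (axis i 1))"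

definition hess :: "(real^('d::finite) \<Rightarrow> real) \<Rightarrow> real^('d::finite) \<Rightarrow> real^('d::finite)^'d" where
  "hess u x = (\<chi> i. grad (\<lambda>y. grad u y $ i) x)"

definition diverg :: "(real^('d::finite) \<Rightarrow> real^('d::finite)) \<Rightarrow> real^('d::finite) \<Rightarrow> real" where
  "diverg F x = (\<Sum>i\<in>UNIV. frechet_derivative (\<lambda>y. F y $ i) (at x) (axis i 1))"

definition C0 :: "real \<Rightarrow> (real^('d::finite) \<Rightarrow> real) set" where
  "C0 a = {g. periodic g \<and> continuous_on UNIV g \<and> holder a g}"

definition C0_norm :: "real \<Rightarrow> (real^('d::finite) \<Rightarrow> real) \<Rightarrow> real" where
  "C0_norm a g = supnorm g + holder_seminorm a g"

definition C2 :: "real \<Rightarrow> (real^('d::finite) \<Rightarrow> real) set" where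
  "C2 b = {u. periodic u \<and> (\<forall>x. u differentiable (at x))
              \<and> (\<forall>x i. (\<lambda>y. grad u y $ i) differentiable (at x))
              \<and> continuous_on UNIV (hess u) \<and> holder b (hess u)}"

definition C2_norm :: "real \<Rightarrow> (real^('d::finite) \<Rightarrow> real) \<Rightarrow> real" where
  "C2_norm b u = supnorm u + supnorm (grad u) + supnorm (hess u) + holder_seminorm b (hess u)"

type_synonym 'd fpair = "(real^('d::finite) \<Rightarrow> real) \<times> (real^('d::finite) \<Rightarrow> real)"

definition padd :: "('d::finite) fpair \<Rightarrow> ('d::finite) fpair \<Rightarrow> ('d::finite) fpair" where
  "padd p q = ((\<lambda>x. fst p x + fst q x), (\<lambda>x. snd p x + snd q x))"

definition psub :: "('d::finite) fpair \<Rightarrow> ('d::finite) fpair \<Rightarrow> ('d::finite) fpair" where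
  "psub p q = ((\<lambda>x. fst p x - fst q x), (\<lambda>x. snd p x - snd q x))"

definition pscale :: "real \<Rightarrow> ('d::finite) fpair \<Rightarrow> ('d::finite) fpair" where
  "pscale c p = ((\<lambda>x. c * fst p x), (\<lambda>x. c * snd p x))"

definition Xsp :: "real \<Rightarrow> real \<Rightarrow> ('d::finite) fpair set" where
  "Xsp b c = C2 b \<times> C2 c"
definition Xnorm :: "real \<Rightarrow> real \<Rightarrow> ('d::finite) fpair \<Rightarrow> real" where
  "Xnorm b c p = C2_norm b (fst p) + C2_norm c (snd p)"
definition Zsp :: "real \<Rightarrow> real \<Rightarrow> ('d::finite) fpair set" where
  "Zsp a b = C0 a \<times> C0 b"
definition Znorm :: "real \<Rightarrow> real \<Rightarrow> ('d::finite) fpair \<Rightarrow> real" where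
  "Znorm a b p = C0_norm a (fst p) + C0_norm b (snd p)"

definition bounded_linear_between ::
  "('d::finite) fpair set \<Rightarrow> (('d::finite) fpair \<Rightarrow> real) \<Rightarrow> ('d::finite) fpair set \<Rightarrow> (('d::finite) fpair \<Rightarrow> real) \<Rightarrow> (('d::finite) fpair \<Rightarrow> ('d::finite) fpair) \<Rightarrow> bool" where
  "bounded_linear_between X NX Z NZ L \<longleftrightarrow>
     (\<forall>h\<in>X. L h \<in> Z) \<and>
     (\<forall>h\<in>X. \<forall>k\<in>X. L (padd h k) = padd (L h) (L k)) \<and>
     (\<forall>h\<in>X. \<forall>c. L (pscale c h) = pscale c (L h)) \<and>
     (\<exists>C. \<forall>h\<in>X. NZ (L h) \<le> C * NX h)"

definition frechet_deriv_at ::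
  "('d::finite) fpair set \<Rightarrow> (('d::finite) fpair \<Rightarrow> real) \<Rightarrow> ('d::finite) fpair set \<Rightarrow> (('d::finite) fpair \<Rightarrow> real) \<Rightarrow>
   (('d::finite) fpair \<Rightarrow> ('d::finite) fpair) \<Rightarrow> (('d::finite) fpair \<Rightarrow> ('d::finite) fpair) \<Rightarrow> ('d::finite) fpair \<Rightarrow> bool" where
  "frechet_deriv_at X NX Z NZ G dGx x \<longleftrightarrow>
     bounded_linear_between X NX Z NZ dGx \<and>
     (\<forall>e>0. \<exists>r>0. \<forall>h\<in>X. NX h < r \<longrightarrow>
         NZ (psub (psub (G (padd x h)) (G x)) (dGx h)) \<le> e * NX h)"

definition deriv_continuous ::
  "('d::finite) fpair set \<Rightarrow> (('d::finite) fpair \<Rightarrow> real) \<Rightarrow> (('d::finite) fpair \<Rightarrow> real) \<Rightarrow> (('d::finite) fpair \<Rightarrow> ('d::finite) fpair \<Rightarrow> ('d::finite) fpair) \<Rightarrow> bool" where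
  "deriv_continuous X NX NZ dG \<longleftrightarrow>
     (\<forall>x\<in>X. \<forall>e>0. \<exists>r>0. \<forall>y\<in>X. NX (psub y x) < r \<longrightarrow>
        (\<forall>h\<in>X. NZ (psub (dG y h) (dG x h)) \<le> e * NX h))"

definition deriv_locally_lipschitz ::
  "('d::finite) fpair set \<Rightarrow> (('d::finite) fpair \<Rightarrow> real) \<Rightarrow> (('d::finite) fpair \<Rightarrow> real) \<Rightarrow> (('d::finite) fpair \<Rightarrow> ('d::finite) fpair \<Rightarrow> ('d::finite) fpair) \<Rightarrow> bool" where
  "deriv_locally_lipschitz X NX NZ dG \<longleftrightarrow>
     (\<forall>x\<in>X. \<exists>r>0. \<exists>K. \<forall>y\<in>X. \<forall>z\<in>X. NX (psub y x) < r \<longrightarrow> NX (psub z x) < r \<longrightarrow>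
        (\<forall>h\<in>X. NZ (psub (dG y h) (dG z h)) \<le> K * NX (psub y z) * NX h))"

definition Gmap :: "(real \<Rightarrow> real) \<Rightarrow> real \<Rightarrow> (real^('d::finite) \<Rightarrow> real) \<Rightarrow> ('d::finite) fpair \<Rightarrow> ('d::finite) fpair" where
  "Gmap f lam m0 p =
     ((\<lambda>x. 1/2 * (norm (grad (fst p) x))\<^sup>2 - f (snd p x)),
      (\<lambda>x. - diverg (\<lambda>y. snd p y *\<^sub>R grad (fst p) y) x - lam * m0 x))"

definition dGmap :: "(real \<Rightarrow> real) \<Rightarrow> ('d::finite) fpair \<Rightarrow> ('d::finite) fpair \<Rightarrow> ('d::finite) fpair" where
  "dGmap f um vr =
     ((\<lambda>x. grad (fst um) x \<bullet> grad (fst vr) x - deriv f (snd um x) * snd vr x),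
      (\<lambda>x. - diverg (\<lambda>y. snd vr y *\<^sub>R grad (fst um) y) x
           - diverg (\<lambda>y. snd um y *\<^sub>R grad (fst vr) y) x))"

end

theory Submission
  imports Defs
begin

definition sbd :: "(real^('d::finite) \<Rightarrow> real) \<Rightarrow> real \<Rightarrow> bool" where
  "sbd g S \<longleftrightarrow> (\<forall>x. \<bar>g x\<bar> \<le> S)"
definition lip :: "(real^('d::finite) \<Rightarrow> real) \<Rightarrow> real \<Rightarrow> bool" where
  "lip g L \<longleftrightarrow> (\<forall>x y. \<bar>g x - g y\<bar> \<le> L * dist x y)"
definition hol :: "real \<Rightarrow> (real^('d::finite) \<Rightarrow> real) \<Rightarrow> real \<Rightarrow> bool" where
  "hol a g K \<longleftrightarrow> (\<forall>x y. \<bar>g x - g y\<bar> \<le> K * dist x y powr a)"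

lemma sbd_nonneg: "sbd g S \<Longrightarrow> 0 \<le> S"
  unfolding sbd_def by (meson abs_ge_zero order_trans)

lemma powr_ge_self: "0 \<le> (t::real) \<Longrightarrow> t \<le> 1 \<Longrightarrow> 0 < a \<Longrightarrow> a \<le> b \<Longrightarrow> t powr b \<le> t powr a"
  by (rule powr_mono') auto

lemma lip_hol:
  assumes "0 < a" "a \<le> 1" "sbd g S" "lip g L" "0 \<le> L"
  shows "hol a g (L + 2*S)"
  unfolding hol_def
proof (intro allI)
  fix x y
  have S: "0 \<le> S" using assms(3) by (rule sbd_nonneg)
  have b: "\<bar>g x - g y\<bar> \<le> 2*S" using assms(3) unfolding sbd_def
    by (smt (verit) abs_triangle_ineq4 )
  show "\<bar>g x - g y\<bar> \<le> (L + 2 * S) * dist x y powr a"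
  proof (cases "dist x y \<le> 1")
    case True
    have "dist x y = dist x y powr 1" by (cases "dist x y = 0") auto
    also have "\<dots> \<le> dist x y powr a" using True assms by (intro powr_ge_self) auto
    finally have "\<bar>g x - g y\<bar> \<le> L * dist x y powr a"
      using assms(4) unfolding lip_def by (meson assms(5) mult_left_mono order_trans)
    moreover have "0 \<le> S * dist x y powr a" using S by simp
    ultimately show ?thesis by (simp add: algebra_simps)
  next
    case False
    then have "1 \<le> dist x y powr a" using assms by (simp add: ge_one_powr_ge_zero)
    then have "2*S \<le> 2*S * dist x y powr a" using S
      by (metis mult.right_neutral mult_left_mono mult_nonneg_nonneg zero_le_numeral)
    moreover have "0 \<le> L * dist x y powr a" using assms by simp
    ultimately show ?thesis using b by (simp add: algebra_simps)
  qed
qed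

lemma hol_mono:
  assumes "0 < a" "a \<le> b" "sbd g S" "hol b g K" "0 \<le> K"
  shows "hol a g (K + 2*S)"
  unfolding hol_def
proof (intro allI)
  fix x y
  have S: "0 \<le> S" using assms(3) by (rule sbd_nonneg)
  have b: "\<bar>g x - g y\<bar> \<le> 2*S" using assms(3) unfolding sbd_def
    by (smt (verit) abs_triangle_ineq4 )
  show "\<bar>g x - g y\<bar> \<le> (K + 2 * S) * dist x y powr a"
  proof (cases "dist x y \<le> 1")
    case True
    have "dist x y powr b \<le> dist x y powr a" using True assms by (intro powr_ge_self) auto
    then have "\<bar>g x - g y\<bar> \<le> K * dist x y powr a"
      using assms(4) unfolding hol_def by (meson assms(5) mult_left_mono order_trans)
    moreover have "0 \<le> S * dist x y powr a" using S by simp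
    ultimately show ?thesis by (simp add: algebra_simps)
  next
    case False
    then have "1 \<le> dist x y powr a" using assms by (simp add: ge_one_powr_ge_zero)
    then have "2*S \<le> 2*S * dist x y powr a" using S
      by (metis mult.right_neutral mult_left_mono mult_nonneg_nonneg zero_le_numeral)
    moreover have "0 \<le> K * dist x y powr a" using assms by simp
    ultimately show ?thesis using b by (simp add: algebra_simps)
  qed
qed

lemma exists_ne_vec: "\<exists>x y::real^('d::finite). x \<noteq> y"
proof -
  have "axis (undefined::'d) (1::real) \<noteq> 0" by (simp add: axis_eq_0_iff)
  then show ?thesis by blast
qed

lemma C0_norm_le:
  fixes g :: "real^('d::finite) \<Rightarrow> real"
  assumes "sbd g S" "hol a g K"
  shows "C0_norm a g \<le> S + K"
proof -
  have "supnorm g \<le> S" unfolding supnorm_def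
    using assms(1) unfolding sbd_def by (intro cSUP_least) auto
  moreover have "holder_seminorm a g \<le> K" unfolding holder_seminorm_def
  proof (rule cSUP_least)
    show "{(x, y). x \<noteq> (y::real^'d)} \<noteq> {}" using exists_ne_vec by auto
  next
    fix p :: "(real^'d) \<times> (real^'d)" assume "p \<in> {(x, y). x \<noteq> y}"
    then have "dist (fst p) (snd p) > 0" by auto
    then have "dist (fst p) (snd p) powr a > 0" by simp
    then show "norm (g (fst p) - g (snd p)) / dist (fst p) (snd p) powr a \<le> K"
      using assms(2) unfolding hol_def by (simp add: divide_le_eq)
  qed
  ultimately show ?thesis unfolding C0_norm_def by simp
qed

lemma hol_cont:
  assumes "0 < a" "hol a g K"
  shows "continuous_on UNIV g"
proof -
  have K: "\<forall>x y. \<bar>g x - g y\<bar> \<le> (max K 1) * dist x y powr a"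
    using assms(2) unfolding hol_def
    by (meson max.cobounded1 mult_right_mono order_trans powr_ge_zero)
  show ?thesis unfolding continuous_on_iff
  proof (intro ballI allI impI)
    fix x e assume e: "(0::real) < e"
    define d where "d = (e / max K 1) powr (1/a)"
    have d: "d > 0" using e unfolding d_def by simp
    show "\<exists>d>0. \<forall>x'\<in>UNIV. dist x' x < d \<longrightarrow> dist (g x') (g x) < e"
    proof (intro exI[of _ d] conjI ballI impI d)
      fix x' assume "dist x' x < d"
      then have "dist x' x powr a < d powr a" using assms(1) by (simp add: powr_less_mono2)
      also have "d powr a = e / max K 1" unfolding d_def using assms(1) e
        by (simp add: powr_powr)
      finally have "max K 1 * dist x' x powr a < e"
        by (simp add: mult.commute pos_less_divide_eq)
      then show "dist (g x') (g x) < e" using K dist_real_def by (smt (verit))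
    qed
  qed
qed

lemma C0_mem: "periodic g \<Longrightarrow> 0 < a \<Longrightarrow> hol a g K \<Longrightarrow> g \<in> C0 a"
  unfolding C0_def holder_def hol_def using hol_cont[of a g K] unfolding hol_def
  by (auto simp: dist_real_def)


lemma sbd_add: "sbd f A \<Longrightarrow> sbd g B \<Longrightarrow> sbd (\<lambda>x. f x + g x) (A + B)"
  unfolding sbd_def by (meson abs_triangle_ineq add_mono order_trans)
lemma sbd_diff: "sbd f A \<Longrightarrow> sbd g B \<Longrightarrow> sbd (\<lambda>x. f x - g x) (A + B)"
  unfolding sbd_def by (meson abs_triangle_ineq4 add_mono order_trans)
lemma sbd_neg: "sbd f A \<Longrightarrow> sbd (\<lambda>x. - f x) A"
  unfolding sbd_def by simp
lemma sbd_mult: "sbd f A \<Longrightarrow> sbd g B \<Longrightarrow> sbd (\<lambda>x. f x * g x) (A * B)"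
  unfolding sbd_def by (simp add: abs_mult mult_mono')
lemma sbd_cmult: "sbd f A \<Longrightarrow> sbd (\<lambda>x. c * f x) (\<bar>c\<bar> * A)"
  unfolding sbd_def by (simp add: abs_mult mult_left_mono)
lemma sbd_mono: "sbd f A \<Longrightarrow> A \<le> B \<Longrightarrow> sbd f B"
  unfolding sbd_def using order_trans by blast
lemma sbd_sum: "finite I \<Longrightarrow> (\<And>i. i \<in> I \<Longrightarrow> sbd (g i) (A i)) \<Longrightarrow> sbd (\<lambda>x. \<Sum>i\<in>I. g i x) (\<Sum>i\<in>I. A i)"
  unfolding sbd_def by (intro allI order_trans[OF sum_abs sum_mono]) auto

lemma lip_add: "lip f A \<Longrightarrow> lip g B \<Longrightarrow> lip (\<lambda>x. f x + g x) (A + B)"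
  unfolding lip_def by (smt (verit, best) distrib_right)
lemma lip_diff: "lip f A \<Longrightarrow> lip g B \<Longrightarrow> lip (\<lambda>x. f x - g x) (A + B)"
  unfolding lip_def by (smt (verit, best) distrib_right)
lemma lip_neg: "lip f A \<Longrightarrow> lip (\<lambda>x. - f x) A"
  unfolding lip_def by (smt (verit, best))
lemma lip_cmult: "lip f A \<Longrightarrow> lip (\<lambda>x. c * f x) (\<bar>c\<bar> * A)"
  unfolding lip_def
  by (metis (no_types, opaque_lifting) abs_ge_zero abs_mult mult.assoc mult_left_mono right_diff_distrib)
lemma lip_mono: "lip f A \<Longrightarrow> A \<le> B \<Longrightarrow> lip f B"
  unfolding lip_def by (meson mult_right_mono order_trans zero_le_dist)
lemma lip_sum: "finite I \<Longrightarrow> (\<And>i. i \<in> I \<Longrightarrow> lip (g i) (A i)) \<Longrightarrow> lip (\<lambda>x. \<Sum>i\<in>I. g i x) (\<Sum>i\<in>I. A i)"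
  unfolding lip_def
proof (intro allI)
  fix x y assume "finite I" "\<And>i. i \<in> I \<Longrightarrow> \<forall>x y. \<bar>g i x - g i y\<bar> \<le> A i * dist x y"
  then have "\<bar>\<Sum>i\<in>I. g i x - g i y\<bar> \<le> (\<Sum>i\<in>I. A i * dist x y)"
    by (intro order_trans[OF sum_abs sum_mono]) auto
  then show "\<bar>(\<Sum>i\<in>I. g i x) - (\<Sum>i\<in>I. g i y)\<bar> \<le> (\<Sum>i\<in>I. A i) * dist x y"
    by (simp add: sum_subtractf sum_distrib_right)
qed

lemma lip_mult:
  assumes "sbd f A" "lip f L" "sbd g B" "lip g M"
  shows "lip (\<lambda>x. f x * g x) (A * M + B * L)"
  unfolding lip_def
proof (intro allI)
  fix x y
  have "f x * g x - f y * g y = f x * (g x - g y) + g y * (f x - f y)" by (simp add: algebra_simps)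
  then have "\<bar>f x * g x - f y * g y\<bar> \<le> \<bar>f x\<bar> * \<bar>g x - g y\<bar> + \<bar>g y\<bar> * \<bar>f x - f y\<bar>"
    by (metis abs_mult abs_triangle_ineq)
  also have "\<dots> \<le> A * (M * dist x y) + B * (L * dist x y)"
    using assms unfolding sbd_def lip_def
    by (intro add_mono mult_mono) (auto intro: order_trans[OF abs_ge_zero])
  finally show "\<bar>f x * g x - f y * g y\<bar> \<le> (A * M + B * L) * dist x y" by (simp add: algebra_simps)
qed

lemma hol_add: "hol a f A \<Longrightarrow> hol a g B \<Longrightarrow> hol a (\<lambda>x. f x + g x) (A + B)"
  unfolding hol_def by (smt (verit, best) distrib_right)
lemma hol_diff: "hol a f A \<Longrightarrow> hol a g B \<Longrightarrow> hol a (\<lambda>x. f x - g x) (A + B)"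
  unfolding hol_def by (smt (verit, best) distrib_right)
lemma hol_neg: "hol a f A \<Longrightarrow> hol a (\<lambda>x. - f x) A"
  unfolding hol_def by (smt (verit, best))
lemma hol_cmult: "hol a f A \<Longrightarrow> hol a (\<lambda>x. c * f x) (\<bar>c\<bar> * A)"
  unfolding hol_def
  by (metis (no_types, opaque_lifting) abs_ge_zero abs_mult mult.assoc mult_left_mono right_diff_distrib)
lemma hol_mono_c: "hol a f A \<Longrightarrow> A \<le> B \<Longrightarrow> hol a f B"
  unfolding hol_def by (meson mult_right_mono order_trans powr_ge_zero)
lemma hol_sum: "finite I \<Longrightarrow> (\<And>i. i \<in> I \<Longrightarrow> hol a (g i) (A i)) \<Longrightarrow> hol a (\<lambda>x. \<Sum>i\<in>I. g i x) (\<Sum>i\<in>I. A i)"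
  unfolding hol_def
proof (intro allI)
  fix x y assume "finite I" "\<And>i. i \<in> I \<Longrightarrow> \<forall>x y. \<bar>g i x - g i y\<bar> \<le> A i * dist x y powr a"
  then have "\<bar>\<Sum>i\<in>I. g i x - g i y\<bar> \<le> (\<Sum>i\<in>I. A i * dist x y powr a)"
    by (intro order_trans[OF sum_abs sum_mono]) auto
  then show "\<bar>(\<Sum>i\<in>I. g i x) - (\<Sum>i\<in>I. g i y)\<bar> \<le> (\<Sum>i\<in>I. A i) * dist x y powr a"
    by (simp add: sum_subtractf sum_distrib_right)
qed

lemma hol_mult:
  assumes "sbd f A" "hol a f L" "sbd g B" "hol a g M"
  shows "hol a (\<lambda>x. f x * g x) (A * M + B * L)"
  unfolding hol_def
proof (intro allI)
  fix x y
  have "f x * g x - f y * g y = f x * (g x - g y) + g y * (f x - f y)" by (simp add: algebra_simps)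
  then have "\<bar>f x * g x - f y * g y\<bar> \<le> \<bar>f x\<bar> * \<bar>g x - g y\<bar> + \<bar>g y\<bar> * \<bar>f x - f y\<bar>"
    by (metis abs_mult abs_triangle_ineq)
  also have "\<dots> \<le> A * (M * dist x y powr a) + B * (L * dist x y powr a)"
    using assms unfolding sbd_def hol_def
    by (intro add_mono mult_mono) (auto intro: order_trans[OF abs_ge_zero])
  finally show "\<bar>f x * g x - f y * g y\<bar> \<le> (A * M + B * L) * dist x y powr a" by (simp add: algebra_simps)
qed

lemma sbd_const: "sbd (\<lambda>x. c) \<bar>c\<bar>" unfolding sbd_def by simp


lemma basis_exp_R: "(\<Sum>i\<in>UNIV. (x$i) *\<^sub>R axis i (1::real)) = (x::real^('d::finite))"
  using basis_expansion[of x] by (simp add: scalar_mult_eq_scaleR)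

lemma inner_cart: "(x::real^('d::finite)) \<bullet> y = (\<Sum>i\<in>UNIV. x$i * y$i)"
  by (simp add: inner_vec_def)

lemma grad_inner:
  fixes u :: "real^('d::finite) \<Rightarrow> real"
  assumes "u differentiable (at x)"
  shows "frechet_derivative u (at x) h = grad u x \<bullet> h"
proof -
  let ?L = "frechet_derivative u (at x)"
  have "(u has_derivative ?L) (at x)" using assms frechet_derivative_works by blast
  then have lin: "linear ?L" using has_derivative_linear by blast
  have "?L h = ?L (\<Sum>i\<in>UNIV. (h$i) *\<^sub>R axis i 1)" by (simp add: basis_exp_R)
  also have "\<dots> = (\<Sum>i\<in>UNIV. (h$i) * ?L (axis i 1))"
    using lin by (simp add: linear_sum linear_scale)
  also have "\<dots> = grad u x \<bullet> h" unfolding grad_def inner_cart by (simp add: mult.commute)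
  finally show ?thesis .
qed

lemma grad_has_derivative:
  fixes u :: "real^('d::finite) \<Rightarrow> real"
  assumes "u differentiable (at x)"
  shows "(u has_derivative (\<lambda>h. grad u x \<bullet> h)) (at x)"
proof -
  have "(u has_derivative frechet_derivative u (at x)) (at x)" using assms frechet_derivative_works by blast
  moreover have "frechet_derivative u (at x) = (\<lambda>h. grad u x \<bullet> h)" using grad_inner[OF assms] by auto
  ultimately show ?thesis by simp
qed

lemma grad_unique:
  fixes u :: "real^('d::finite) \<Rightarrow> real"
  assumes "(u has_derivative (\<lambda>h. g \<bullet> h)) (at x)"
  shows "grad u x = g"
proof -
  have "frechet_derivative u (at x) = (\<lambda>h. g \<bullet> h)" using frechet_derivative_at[OF assms] by simp
  then show ?thesis unfolding grad_def by (simp add: vec_eq_iff cart_eq_inner_axis[symmetric])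
qed

lemma mvt_scalar:
  fixes u :: "real^('d::finite) \<Rightarrow> real"
  assumes "\<And>x. u differentiable (at x)" "\<And>x. norm (grad u x) \<le> B"
  shows "\<bar>u x - u y\<bar> \<le> B * dist x y"
proof -
  have "norm (u x - u y) \<le> B * norm (x - y)"
  proof (rule differentiable_bound[of UNIV u "\<lambda>x h. grad u x \<bullet> h"])
    show "convex (UNIV::(real^'d) set)" by simp
    show "\<And>x. x \<in> UNIV \<Longrightarrow> (u has_derivative (\<lambda>h. grad u x \<bullet> h)) (at x within UNIV)"
      using grad_has_derivative assms(1) by auto
    show "\<And>x. x \<in> UNIV \<Longrightarrow> onorm (\<lambda>h. grad u x \<bullet> h) \<le> B"
    proof (rule onorm_le)
      fix x h
      have "norm (grad u x \<bullet> h) \<le> norm (grad u x) * norm h" by (simp add: Cauchy_Schwarz_ineq2)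
      also have "\<dots> \<le> B * norm h" using assms(2) by (simp add: mult_right_mono)
      finally show "norm (grad u x \<bullet> h) \<le> B * norm h" .
    qed
  qed auto
  then show ?thesis by (simp add: dist_norm)
qed

lemma periodic_shift_deriv:
  fixes u :: "real^('d::finite) \<Rightarrow> 'b::real_normed_vector"
  assumes "\<And>y. u (y + e) = u y"
  shows "(u has_derivative D) (at (x + e)) \<longleftrightarrow> (u has_derivative D) (at x)"
proof
  assume h: "(u has_derivative D) (at (x + e))"
  have "((\<lambda>y. y + e) has_derivative (\<lambda>h. h)) (at x)" by (auto intro!: derivative_eq_intros)
  from has_derivative_compose[OF this h] have "((\<lambda>y. u (y + e)) has_derivative D) (at x)" by simp
  then show "(u has_derivative D) (at x)" using assms by simp
next
  assume h: "(u has_derivative D) (at x)"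
  have "((\<lambda>y. y - e) has_derivative (\<lambda>h. h)) (at (x + e))" by (auto intro!: derivative_eq_intros)
  from has_derivative_compose[OF this] h have "((\<lambda>y. u (y - e)) has_derivative D) (at (x + e))" by simp
  moreover have "\<And>y. u (y - e) = u y" using assms[of "y - e" for y] by simp
  ultimately show "(u has_derivative D) (at (x + e))" by simp
qed

lemma periodic_grad:
  fixes u :: "real^('d::finite) \<Rightarrow> real"
  assumes "periodic u"
  shows "periodic (grad u)"
  unfolding periodic_def
proof (intro allI)
  fix x i
  have "frechet_derivative u (at (x + axis i 1)) = frechet_derivative u (at x)"
    unfolding frechet_derivative_def
    using periodic_shift_deriv[of u "axis i 1" _ x] assms unfolding periodic_def by simp
  then show "grad u (x + axis i 1) = grad u x" unfolding grad_def by simp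
qed

lemma periodic_hess:
  fixes u :: "real^('d::finite) \<Rightarrow> real"
  assumes "periodic u"
  shows "periodic (hess u)"
proof -
  have "periodic (\<lambda>y. grad u y $ i)" for i using periodic_grad[OF assms] unfolding periodic_def by simp
  then have "periodic (grad (\<lambda>y. grad u y $ i))" for i using periodic_grad by blast
  then show ?thesis unfolding periodic_def hess_def by (simp add: vec_eq_iff)
qed


lemma periodic_nat:
  assumes "periodic g"
  shows "g (x + real n *\<^sub>R axis i 1) = g x"
proof (induction n arbitrary: x)
  case 0 then show ?case by simp
next
  case (Suc n)
  have "g (x + real (Suc n) *\<^sub>R axis i 1) = g ((x + real n *\<^sub>R axis i 1) + axis i 1)"
    by (simp add: algebra_simps)
  also have "\<dots> = g (x + real n *\<^sub>R axis i 1)" using assms unfolding periodic_def by blast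
  finally show ?case using Suc by simp
qed

lemma periodic_int:
  assumes "periodic g"
  shows "g (x + real_of_int k *\<^sub>R axis i 1) = g x"
proof (cases "k \<ge> 0")
  case True
  then obtain n where "k = int n" by (metis nonneg_eq_int)
  then show ?thesis using periodic_nat[OF assms] by simp
next
  case False
  define n where "n = nat (-k)"
  have n: "k = - int n" using False unfolding n_def by simp
  have "g x = g ((x + real_of_int k *\<^sub>R axis i 1) + real n *\<^sub>R axis i 1)"
    by (simp add: n algebra_simps)
  also have "\<dots> = g (x + real_of_int k *\<^sub>R axis i 1)" using periodic_nat[OF assms] by blast
  finally show ?thesis by simp
qed

lemma periodic_sum:
  assumes "periodic g" "finite S"
  shows "g (x + (\<Sum>i\<in>S. real_of_int (k i) *\<^sub>R axis i 1)) = g x"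
  using assms(2)
proof (induction S arbitrary: x rule: finite_induct)
  case empty then show ?case by simp
next
  case (insert j S)
  have "g (x + (\<Sum>i\<in>insert j S. real_of_int (k i) *\<^sub>R axis i 1))
      = g ((x + (\<Sum>i\<in>S. real_of_int (k i) *\<^sub>R axis i 1)) + real_of_int (k j) *\<^sub>R axis j 1)"
    using insert by (simp add: algebra_simps)
  also have "\<dots> = g (x + (\<Sum>i\<in>S. real_of_int (k i) *\<^sub>R axis i 1))" by (rule periodic_int[OF assms(1)])
  finally show ?case using insert by simp
qed

lemma periodic_range:
  fixes g :: "real^('d::finite) \<Rightarrow> 'b"
  assumes "periodic g"
  shows "range g \<subseteq> g ` cbox 0 1"
proof
  fix v assume "v \<in> range g"
  then obtain x where v: "v = g x" by auto
  define z :: "real^'d" where "z = (\<chi> i. real_of_int \<lfloor>x$i\<rfloor>)"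
  have z: "z = (\<Sum>i\<in>UNIV. real_of_int \<lfloor>x$i\<rfloor> *\<^sub>R axis i 1)"
    using basis_exp_R[of z] unfolding z_def by simp
  have "g x = g ((x - z) + z)" by simp
  also have "\<dots> = g (x - z)" unfolding z by (rule periodic_sum[OF assms]) simp
  finally have "v = g (x - z)" using v by simp
  moreover have "x - z \<in> cbox 0 1" unfolding mem_box_cart z_def
    by (auto simp: of_int_floor_le) (smt (verit) real_of_int_floor_add_one_gt)
  ultimately show "v \<in> g ` cbox 0 1" by blast
qed

lemma periodic_bounded:
  fixes g :: "real^('d::finite) \<Rightarrow> 'b::real_normed_vector"
  assumes "periodic g" "continuous_on UNIV g"
  shows "bounded (range g)"
proof -
  have "compact (g ` cbox 0 1)" using assms(2)
    by (intro compact_continuous_image) (auto intro: continuous_on_subset)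
  then show ?thesis using periodic_range[OF assms(1)] bounded_subset compact_imp_bounded by blast
qed

lemma periodic_bdd:
  fixes g :: "real^('d::finite) \<Rightarrow> 'b::real_normed_vector"
  assumes "periodic g" "continuous_on UNIV g"
  shows "bdd_above (range (\<lambda>x. norm (g x)))" "\<And>x. norm (g x) \<le> supnorm g"
proof -
  obtain B where "\<forall>y\<in>range g. norm y \<le> B" using periodic_bounded[OF assms] bounded_iff by blast
  then show b: "bdd_above (range (\<lambda>x. norm (g x)))" by (auto intro: bdd_aboveI)
  show "norm (g x) \<le> supnorm g" for x unfolding supnorm_def by (rule cSUP_upper[OF _ b]) auto
qed


lemma nth_le: "norm ((x::'a::real_normed_vector^'n) $ i) \<le> norm x"
  by (rule Finite_Cartesian_Product.norm_nth_le)

lemma norm_nth2: "\<bar>(A::real^'n^'m) $ i $ j\<bar> \<le> norm A"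
  using component_le_norm_cart[of "A$i" j] nth_le[of A i] by linarith

lemma hess_row: "hess u x $ i = grad (\<lambda>y. grad u y $ i) x"
  unfolding hess_def by simp

lemma holder_sem_bound:
  fixes g :: "real^('d::finite) \<Rightarrow> 'b::real_normed_vector"
  assumes "holder a g"
  shows "\<And>x y. norm (g x - g y) \<le> holder_seminorm a g * dist x y powr a"
    and "0 \<le> holder_seminorm a g"
proof -
  obtain C where C: "\<forall>x y. norm (g x - g y) \<le> C * dist x y powr a" using assms unfolding holder_def by blast
  let ?q = "\<lambda>p::(real^'d)\<times>(real^'d). norm (g (fst p) - g (snd p)) / dist (fst p) (snd p) powr a"
  have bdd: "bdd_above (?q ` {(x,y). x \<noteq> y})"
  proof (rule bdd_aboveI)
    fix r assume "r \<in> ?q ` {(x,y). x \<noteq> y}"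
    then obtain p where p: "fst p \<noteq> snd p" "r = ?q p" by auto
    then have "dist (fst p) (snd p) powr a > 0" by simp
    then show "r \<le> C" using C p by (simp add: divide_le_eq)
  qed
  have up: "?q p \<le> holder_seminorm a g" if "fst p \<noteq> snd p" for p
    unfolding holder_seminorm_def using that by (intro cSUP_upper[OF _ bdd]) auto
  obtain x0 y0 :: "real^'d" where "x0 \<noteq> y0" using exists_ne_vec by blast
  then show nn: "0 \<le> holder_seminorm a g" using up[of "(x0,y0)"] by (smt (verit) divide_nonneg_nonneg norm_ge_zero powr_ge_zero fst_conv snd_conv)
  fix x y
  show "norm (g x - g y) \<le> holder_seminorm a g * dist x y powr a"
  proof (cases "x = y")
    case True then show ?thesis by simp
  next
    case False
    then have "dist x y powr a > 0" by simp
    then show ?thesis using up[of "(x,y)"] False by (simp add: divide_le_eq)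
  qed
qed

locale c2fn =
  fixes u :: "real^('d::finite) \<Rightarrow> real" and b :: real
  assumes mem: "u \<in> C2 b"
begin

lemma per: "periodic u" using mem unfolding C2_def by blast
lemma diff: "u differentiable (at x)" using mem unfolding C2_def by blast
lemma diff2: "(\<lambda>y. grad u y $ i) differentiable (at x)" using mem unfolding C2_def by blast
lemma hcont: "continuous_on UNIV (hess u)" using mem unfolding C2_def by blast
lemma hhol: "holder b (hess u)" using mem unfolding C2_def by blast

lemma ucont: "continuous_on UNIV u"
  using diff by (intro differentiable_imp_continuous_on) (auto simp: differentiable_on_def differentiable_at_withinI)
lemma gcont_i: "continuous_on UNIV (\<lambda>y. grad u y $ i)"
  using diff2 by (intro differentiable_imp_continuous_on) (auto simp: differentiable_on_def differentiable_at_withinI)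
lemma gcont: "continuous_on UNIV (grad u)"
proof -
  have "continuous_on UNIV (\<lambda>y. \<chi> i. grad u y $ i)" by (intro continuous_on_vec_lambda gcont_i)
  then show ?thesis by simp
qed

lemma gper: "periodic (grad u)" using periodic_grad[OF per] .
lemma hper: "periodic (hess u)" using periodic_hess[OF per] .
lemma gper_i: "periodic (\<lambda>y. grad u y $ i)" using gper unfolding periodic_def by simp
lemma hper_ii: "periodic (\<lambda>y. hess u y $ i $ i)" using hper unfolding periodic_def by simp

definition N where "N = C2_norm b u"

lemma ub: "norm (u x) \<le> supnorm u" using periodic_bdd(2)[OF per ucont] .
lemma gb: "norm (grad u x) \<le> supnorm (grad u)" using periodic_bdd(2)[OF gper gcont] .
lemma hb: "norm (hess u x) \<le> supnorm (hess u)" using periodic_bdd(2)[OF hper hcont] .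
lemma hs: "norm (hess u x - hess u y) \<le> holder_seminorm b (hess u) * dist x y powr b"
  using holder_sem_bound(1)[OF hhol] .
lemma hs0: "0 \<le> holder_seminorm b (hess u)" using holder_sem_bound(2)[OF hhol] .
lemma su0: "0 \<le> supnorm u" using ub[of 0] norm_ge_zero order_trans by blast
lemma sg0: "0 \<le> supnorm (grad u)" using gb[of 0] norm_ge_zero order_trans by blast
lemma sh0: "0 \<le> supnorm (hess u)" using hb[of 0] norm_ge_zero order_trans by blast

lemma N_def': "N = supnorm u + supnorm (grad u) + supnorm (hess u) + holder_seminorm b (hess u)"
  unfolding N_def C2_norm_def by simp

lemma N0: "0 \<le> N" unfolding N_def' using su0 sg0 sh0 hs0 by simp
lemma gN: "norm (grad u x) \<le> N" unfolding N_def' using gb[of x] su0 sh0 hs0 by simp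
lemma hN: "norm (hess u x) \<le> N" unfolding N_def' using hb[of x] su0 sg0 hs0 by simp

lemma sbd_u: "sbd u N" unfolding sbd_def
proof
  fix x have "\<bar>u x\<bar> \<le> supnorm u" using ub[of x] by simp
  then show "\<bar>u x\<bar> \<le> N" unfolding N_def' using sg0 sh0 hs0 by linarith
qed
lemma lip_u: "lip u N" unfolding lip_def using mvt_scalar[OF diff gN] by blast
lemma sbd_g: "sbd (\<lambda>y. grad u y $ i) N" unfolding sbd_def
  using gN component_le_norm_cart by (metis order_trans)
lemma lip_g: "lip (\<lambda>y. grad u y $ i) N"
  unfolding lip_def
proof (intro allI)
  fix x y
  have "norm (grad (\<lambda>y. grad u y $ i) z) \<le> N" for z
    using hN[of z] nth_le[of "hess u z" i] unfolding hess_row by simp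
  then show "\<bar>grad u x $ i - grad u y $ i\<bar> \<le> N * dist x y" using mvt_scalar[OF diff2] by blast
qed
lemma sbd_h: "sbd (\<lambda>y. hess u y $ i $ i) N" unfolding sbd_def
  using hN norm_nth2 by (metis order_trans)
lemma hol_h: "hol b (\<lambda>y. hess u y $ i $ i) N"
  unfolding hol_def
proof (intro allI)
  fix x y
  have "\<bar>hess u x $ i $ i - hess u y $ i $ i\<bar> \<le> norm (hess u x - hess u y)"
    using norm_nth2[of "hess u x - hess u y" i i] by simp
  also have "\<dots> \<le> holder_seminorm b (hess u) * dist x y powr b" by (rule hs)
  also have "\<dots> \<le> N * dist x y powr b" unfolding N_def' using su0 sg0 sh0
    by (intro mult_right_mono) auto
  finally show "\<bar>hess u x $ i $ i - hess u y $ i $ i\<bar> \<le> N * dist x y powr b" .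
qed

end


definition tw :: "(real^('d::finite) \<Rightarrow> real) \<Rightarrow> bool" where
  "tw u \<longleftrightarrow> (\<forall>x. u differentiable (at x)) \<and> (\<forall>x i. (\<lambda>y. grad u y $ i) differentiable (at x))"

lemma (in c2fn) tw: "tw u" unfolding tw_def using diff diff2 by blast

lemma grad_add:
  fixes u v :: "real^('d::finite) \<Rightarrow> real"
  assumes "u differentiable (at x)" "v differentiable (at x)"
  shows "grad (\<lambda>y. u y + v y) x = grad u x + grad v x"
proof (rule grad_unique)
  have "((\<lambda>y. u y + v y) has_derivative (\<lambda>h. grad u x \<bullet> h + grad v x \<bullet> h)) (at x)"
    by (intro has_derivative_add grad_has_derivative assms)
  then show "((\<lambda>y. u y + v y) has_derivative (\<lambda>h. (grad u x + grad v x) \<bullet> h)) (at x)"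
    by (simp add: inner_add_left)
qed

lemma grad_diff:
  fixes u v :: "real^('d::finite) \<Rightarrow> real"
  assumes "u differentiable (at x)" "v differentiable (at x)"
  shows "grad (\<lambda>y. u y - v y) x = grad u x - grad v x"
proof (rule grad_unique)
  have "((\<lambda>y. u y - v y) has_derivative (\<lambda>h. grad u x \<bullet> h - grad v x \<bullet> h)) (at x)"
    by (intro has_derivative_diff grad_has_derivative assms)
  then show "((\<lambda>y. u y - v y) has_derivative (\<lambda>h. (grad u x - grad v x) \<bullet> h)) (at x)"
    by (simp add: inner_diff_left)
qed

lemma grad_cmult:
  fixes u :: "real^('d::finite) \<Rightarrow> real"
  assumes "u differentiable (at x)"
  shows "grad (\<lambda>y. c * u y) x = c *\<^sub>R grad u x"
proof (rule grad_unique)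
  have "((\<lambda>y. c * u y) has_derivative (\<lambda>h. c * (grad u x \<bullet> h))) (at x)"
    by (intro has_derivative_mult_right grad_has_derivative assms)
  then show "((\<lambda>y. c * u y) has_derivative (\<lambda>h. (c *\<^sub>R grad u x) \<bullet> h)) (at x)"
    by simp
qed

lemma tw_add: "tw u \<Longrightarrow> tw v \<Longrightarrow> tw (\<lambda>y. u y + v y)"
  unfolding tw_def by (simp add: grad_add)
lemma tw_diff: "tw u \<Longrightarrow> tw v \<Longrightarrow> tw (\<lambda>y. u y - v y)"
  unfolding tw_def by (simp add: grad_diff)
lemma tw_cmult: "tw u \<Longrightarrow> tw (\<lambda>y. c * u y)"
  unfolding tw_def by (simp add: grad_cmult)

lemma tw_d1: "tw u \<Longrightarrow> u differentiable (at x)" unfolding tw_def by blast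
lemma tw_d2: "tw u \<Longrightarrow> (\<lambda>y. grad u y $ i) differentiable (at x)" unfolding tw_def by blast

lemma hess_add:
  assumes "tw u" "tw v"
  shows "hess (\<lambda>y. u y + v y) x = hess u x + hess v x"
proof -
  have e: "(\<lambda>y. grad (\<lambda>y. u y + v y) y $ i) = (\<lambda>y. grad u y $ i + grad v y $ i)" for i
    using assms by (simp add: grad_add tw_d1)
  show ?thesis unfolding hess_def e using assms
    by (simp add: vec_eq_iff grad_add tw_d2)
qed

lemma hess_diff:
  assumes "tw u" "tw v"
  shows "hess (\<lambda>y. u y - v y) x = hess u x - hess v x"
proof -
  have e: "(\<lambda>y. grad (\<lambda>y. u y - v y) y $ i) = (\<lambda>y. grad u y $ i - grad v y $ i)" for i
    using assms by (simp add: grad_diff tw_d1)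
  show ?thesis unfolding hess_def e using assms
    by (simp add: vec_eq_iff grad_diff tw_d2)
qed

lemma hess_cmult:
  assumes "tw u"
  shows "hess (\<lambda>y. c * u y) x = c *\<^sub>R hess u x"
proof -
  have e: "(\<lambda>y. grad (\<lambda>y. c * u y) y $ i) = (\<lambda>y. c * grad u y $ i)" for i
    using assms by (simp add: grad_cmult tw_d1)
  show ?thesis unfolding hess_def e using assms
    by (simp add: vec_eq_iff grad_cmult tw_d2)
qed

definition Dt :: "(real^('d::finite) \<Rightarrow> real) \<Rightarrow> (real^('d::finite) \<Rightarrow> real) \<Rightarrow> real^('d::finite) \<Rightarrow> real" where
  "Dt r u x = (\<Sum>i\<in>UNIV. grad r x $ i * grad u x $ i + r x * hess u x $ i $ i)"

definition IP :: "(real^('d::finite) \<Rightarrow> real) \<Rightarrow> (real^('d::finite) \<Rightarrow> real) \<Rightarrow> real^('d::finite) \<Rightarrow> real" where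
  "IP u v x = (\<Sum>i\<in>UNIV. grad u x $ i * grad v x $ i)"

lemma diverg_formula:
  assumes "tw u" "\<And>x. r differentiable (at x)"
  shows "diverg (\<lambda>y. r y *\<^sub>R grad u y) x = Dt r u x"
proof -
  have "frechet_derivative (\<lambda>y. (r y *\<^sub>R grad u y) $ i) (at x) (axis i 1)
        = grad r x $ i * grad u x $ i + r x * hess u x $ i $ i" for i
  proof -
    have "((\<lambda>y. r y * grad u y $ i) has_derivative
          (\<lambda>h. r x * (grad (\<lambda>y. grad u y $ i) x \<bullet> h) + (grad r x \<bullet> h) * grad u x $ i)) (at x)"
      by (intro has_derivative_mult grad_has_derivative assms tw_d2)
    from frechet_derivative_at[OF this]
    have "frechet_derivative (\<lambda>y. r y * grad u y $ i) (at x) =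
          (\<lambda>h. r x * (grad (\<lambda>y. grad u y $ i) x \<bullet> h) + (grad r x \<bullet> h) * grad u x $ i)" by simp
    then show ?thesis by (simp add: hess_row cart_eq_inner_axis[symmetric] algebra_simps)
  qed
  then show ?thesis unfolding diverg_def Dt_def by simp
qed

lemma norm_sq_IP: "(norm (grad u x))\<^sup>2 = IP u u x"
  unfolding IP_def by (simp add: power2_norm_eq_inner inner_cart)

lemma inner_IP: "grad u x \<bullet> grad v x = IP u v x"
  unfolding IP_def by (simp add: inner_cart)

lemma Gmap_eq:
  assumes "tw (fst p)" "\<And>x. snd p differentiable (at x)"
  shows "Gmap f lam m0 p = ((\<lambda>x. 1/2 * IP (fst p) (fst p) x - f (snd p x)),
                          (\<lambda>x. - Dt (snd p) (fst p) x - lam * m0 x))"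
  unfolding Gmap_def by (simp add: norm_sq_IP diverg_formula assms)

lemma dGmap_eq:
  assumes "tw (fst p)" "\<And>x. snd p differentiable (at x)" "tw (fst h)" "\<And>x. snd h differentiable (at x)"
  shows "dGmap f p h = ((\<lambda>x. IP (fst p) (fst h) x - deriv f (snd p x) * snd h x),
                          (\<lambda>x. - Dt (snd h) (fst p) x - Dt (snd p) (fst h) x))"
  unfolding dGmap_def by (simp add: inner_IP diverg_formula assms)


lemma C2_diff:
  assumes u: "u \<in> C2 b" and v: "v \<in> C2 b"
  shows "(\<lambda>x. u x - v x) \<in> C2 b"
proof -
  interpret U: c2fn u b by (unfold_locales, rule u)
  interpret V: c2fn v b by (unfold_locales, rule v)
  have e: "(\<lambda>y. grad (\<lambda>x. u x - v x) y $ i) = (\<lambda>y. grad u y $ i - grad v y $ i)" for i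
    by (simp add: grad_diff U.diff V.diff)
  have h: "hess (\<lambda>x. u x - v x) = (\<lambda>x. hess u x - hess v x)"
    by (simp add: fun_eq_iff hess_diff U.tw V.tw)
  obtain C1 where C1: "\<forall>x y. norm (hess u x - hess u y) \<le> C1 * dist x y powr b" using U.hhol unfolding holder_def by blast
  obtain C2 where C2: "\<forall>x y. norm (hess v x - hess v y) \<le> C2 * dist x y powr b" using V.hhol unfolding holder_def by blast
  have H: "holder b (\<lambda>x. hess u x - hess v x)" unfolding holder_def
  proof (intro exI[of _ "C1 + C2"] allI)
    fix x y
    have "(hess u x - hess v x) - (hess u y - hess v y) = (hess u x - hess u y) - (hess v x - hess v y)"
      by (simp add: algebra_simps)
    note eq = this
    have "norm ((hess u x - hess v x) - (hess u y - hess v y)) \<le> norm (hess u x - hess u y) + norm (hess v x - hess v y)"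
      unfolding eq by (rule norm_triangle_ineq4)
    also have "\<dots> \<le> C1 * dist x y powr b + C2 * dist x y powr b" using C1 C2 by (intro add_mono) auto
    finally show "norm ((hess u x - hess v x) - (hess u y - hess v y)) \<le> (C1 + C2) * dist x y powr b"
      by (simp add: distrib_right)
  qed
  have P: "periodic (\<lambda>x. u x - v x)" using U.per V.per unfolding periodic_def by simp
  have Cn: "continuous_on UNIV (\<lambda>x. hess u x - hess v x)" by (intro continuous_on_diff U.hcont V.hcont)
  have D2: "\<And>i x. (\<lambda>y. grad (\<lambda>x. u x - v x) y $ i) differentiable (at x)"
    unfolding e by (intro differentiable_diff U.diff2 V.diff2)
  have D1: "\<And>x. (\<lambda>x. u x - v x) differentiable (at x)" by (intro differentiable_diff U.diff V.diff)
  show ?thesis unfolding C2_def mem_Collect_eq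
  proof (intro conjI allI)
    show "holder b (hess (\<lambda>x. u x - v x))" unfolding h by (rule H)
    show "continuous_on UNIV (hess (\<lambda>x. u x - v x))" unfolding h by (rule Cn)
  qed (fact P D1 D2)+
qed

lemma C2_add:
  assumes u: "u \<in> C2 b" and v: "v \<in> C2 b"
  shows "(\<lambda>x. u x + v x) \<in> C2 b"
proof -
  interpret U: c2fn u b by (unfold_locales, rule u)
  interpret V: c2fn v b by (unfold_locales, rule v)
  have e: "(\<lambda>y. grad (\<lambda>x. u x + v x) y $ i) = (\<lambda>y. grad u y $ i + grad v y $ i)" for i
    by (simp add: grad_add U.diff V.diff)
  have h: "hess (\<lambda>x. u x + v x) = (\<lambda>x. hess u x + hess v x)"
    by (simp add: fun_eq_iff hess_add U.tw V.tw)
  obtain C1 where C1: "\<forall>x y. norm (hess u x - hess u y) \<le> C1 * dist x y powr b" using U.hhol unfolding holder_def by blast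
  obtain C2 where C2: "\<forall>x y. norm (hess v x - hess v y) \<le> C2 * dist x y powr b" using V.hhol unfolding holder_def by blast
  have H: "holder b (\<lambda>x. hess u x + hess v x)" unfolding holder_def
  proof (intro exI[of _ "C1 + C2"] allI)
    fix x y
    have "(hess u x + hess v x) - (hess u y + hess v y) = (hess u x - hess u y) + (hess v x - hess v y)"
      by (simp add: algebra_simps)
    note eq = this
    have "norm ((hess u x + hess v x) - (hess u y + hess v y)) \<le> norm (hess u x - hess u y) + norm (hess v x - hess v y)"
      unfolding eq by (rule norm_triangle_ineq)
    also have "\<dots> \<le> C1 * dist x y powr b + C2 * dist x y powr b" using C1 C2 by (intro add_mono) auto
    finally show "norm ((hess u x + hess v x) - (hess u y + hess v y)) \<le> (C1 + C2) * dist x y powr b"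
      by (simp add: distrib_right)
  qed
  have P: "periodic (\<lambda>x. u x + v x)" using U.per V.per unfolding periodic_def by simp
  have Cn: "continuous_on UNIV (\<lambda>x. hess u x + hess v x)" by (intro continuous_on_add U.hcont V.hcont)
  have D2: "\<And>i x. (\<lambda>y. grad (\<lambda>x. u x + v x) y $ i) differentiable (at x)"
    unfolding e by (intro differentiable_add U.diff2 V.diff2)
  have D1: "\<And>x. (\<lambda>x. u x + v x) differentiable (at x)" by (intro differentiable_add U.diff V.diff)
  show ?thesis unfolding C2_def mem_Collect_eq
  proof (intro conjI allI)
    show "holder b (hess (\<lambda>x. u x + v x))" unfolding h by (rule H)
    show "continuous_on UNIV (hess (\<lambda>x. u x + v x))" unfolding h by (rule Cn)
  qed (fact P D1 D2)+
qed


abbreviation dd where "dd \<equiv> real CARD('d::finite)"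

lemma Dt_bounds:
  fixes r u :: "real^('d::finite) \<Rightarrow> real"
  assumes r: "r \<in> C2 c" and u: "u \<in> C2 b" and a: "0 < a" "a \<le> b" "a \<le> 1"
  shows "sbd (Dt r u) (real CARD('d) * (2 * C2_norm c r * C2_norm b u))"
    and "hol a (Dt r u) (real CARD('d) * (10 * C2_norm c r * C2_norm b u))"
proof -
  interpret R: c2fn r c by (unfold_locales, rule r)
  interpret U: c2fn u b by (unfold_locales, rule u)
  have Nr: "R.N = C2_norm c r" and Nu: "U.N = C2_norm b u" by (simp_all add: R.N_def U.N_def)
  have s1: "sbd (\<lambda>x. grad r x $ i * grad u x $ i) (R.N * U.N)" for i
    by (intro sbd_mult R.sbd_g U.sbd_g)
  have l1: "lip (\<lambda>x. grad r x $ i * grad u x $ i) (R.N * U.N + U.N * R.N)" for i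
    by (intro lip_mult R.sbd_g U.sbd_g R.lip_g U.lip_g)
  have h1: "hol a (\<lambda>x. grad r x $ i * grad u x $ i) (4 * R.N * U.N)" for i
    using lip_hol[OF a(1) a(3) s1 l1] R.N0 U.N0 by (simp add: algebra_simps)
  have hr: "hol a r (3 * R.N)" using lip_hol[OF a(1) a(3) R.sbd_u R.lip_u R.N0] by simp
  have hh: "hol a (\<lambda>x. hess u x $ i $ i) (3 * U.N)" for i
    using hol_mono[OF a(1) a(2) U.sbd_h U.hol_h U.N0] by simp
  have s2: "sbd (\<lambda>x. r x * hess u x $ i $ i) (R.N * U.N)" for i
    by (intro sbd_mult R.sbd_u U.sbd_h)
  have h2: "hol a (\<lambda>x. r x * hess u x $ i $ i) (R.N * (3 * U.N) + U.N * (3 * R.N))" for i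
    by (intro hol_mult R.sbd_u U.sbd_h hr hh)
  have s: "sbd (\<lambda>x. grad r x $ i * grad u x $ i + r x * hess u x $ i $ i) (2 * R.N * U.N)" for i
    using sbd_add[OF s1[of i] s2[of i]] by (simp add: algebra_simps)
  have h: "hol a (\<lambda>x. grad r x $ i * grad u x $ i + r x * hess u x $ i $ i) (10 * R.N * U.N)" for i
    using hol_add[OF h1[of i] h2[of i]] by (simp add: algebra_simps)
  show "sbd (Dt r u) (real CARD('d) * (2 * C2_norm c r * C2_norm b u))"
  proof -
    have "sbd (\<lambda>x. \<Sum>i\<in>UNIV. grad r x $ i * grad u x $ i + r x * hess u x $ i $ i) (\<Sum>i\<in>(UNIV::'d set). 2 * R.N * U.N)"
      by (rule sbd_sum) (auto intro: s)
    then show ?thesis unfolding Dt_def[abs_def] Nr[symmetric] Nu[symmetric] by (simp add: algebra_simps)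
  qed
  show "hol a (Dt r u) (real CARD('d) * (10 * C2_norm c r * C2_norm b u))"
  proof -
    have "hol a (\<lambda>x. \<Sum>i\<in>UNIV. grad r x $ i * grad u x $ i + r x * hess u x $ i $ i) (\<Sum>i\<in>(UNIV::'d set). 10 * R.N * U.N)"
      by (rule hol_sum) (auto intro: h)
    then show ?thesis unfolding Dt_def[abs_def] Nr[symmetric] Nu[symmetric] by (simp add: algebra_simps)
  qed
qed

lemma IP_bounds:
  fixes u v :: "real^('d::finite) \<Rightarrow> real"
  assumes u: "u \<in> C2 b" and v: "v \<in> C2 c"
  shows "sbd (IP u v) (real CARD('d) * (C2_norm b u * C2_norm c v))"
    and "lip (IP u v) (real CARD('d) * (2 * C2_norm b u * C2_norm c v))"
proof -
  interpret U: c2fn u b by (unfold_locales, rule u)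
  interpret V: c2fn v c by (unfold_locales, rule v)
  have Nv: "V.N = C2_norm c v" and Nu: "U.N = C2_norm b u" by (simp_all add: V.N_def U.N_def)
  have s1: "sbd (\<lambda>x. grad u x $ i * grad v x $ i) (U.N * V.N)" for i
    by (intro sbd_mult U.sbd_g V.sbd_g)
  have l1: "lip (\<lambda>x. grad u x $ i * grad v x $ i) (2 * U.N * V.N)" for i
    using lip_mult[OF U.sbd_g U.lip_g V.sbd_g V.lip_g] by (simp add: algebra_simps)
  show "sbd (IP u v) (real CARD('d) * (C2_norm b u * C2_norm c v))"
  proof -
    have "sbd (\<lambda>x. \<Sum>i\<in>UNIV. grad u x $ i * grad v x $ i) (\<Sum>i\<in>(UNIV::'d set). U.N * V.N)"
      by (rule sbd_sum) (auto intro: s1)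
    then show ?thesis unfolding IP_def[abs_def] Nv[symmetric] Nu[symmetric] by (simp add: algebra_simps)
  qed
  show "lip (IP u v) (real CARD('d) * (2 * C2_norm b u * C2_norm c v))"
  proof -
    have "lip (\<lambda>x. \<Sum>i\<in>UNIV. grad u x $ i * grad v x $ i) (\<Sum>i\<in>(UNIV::'d set). 2 * U.N * V.N)"
      by (rule lip_sum) (auto intro: l1)
    then show ?thesis unfolding IP_def[abs_def] Nv[symmetric] Nu[symmetric] by (simp add: algebra_simps)
  qed
qed

lemma Dt_per: "periodic r \<Longrightarrow> periodic u \<Longrightarrow> periodic (Dt r u)"
  using periodic_grad[of r] periodic_grad[of u] periodic_hess[of u] unfolding periodic_def Dt_def by simp
lemma IP_per: "periodic u \<Longrightarrow> periodic v \<Longrightarrow> periodic (IP u v)"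
  using periodic_grad[of u] periodic_grad[of v] unfolding periodic_def IP_def by simp


lemma mvt_bound1:
  fixes g g' :: "real \<Rightarrow> real"
  assumes d: "\<And>x. DERIV g x :> g' x" and bd: "\<And>t. min a b \<le> t \<Longrightarrow> t \<le> max a b \<Longrightarrow> \<bar>g' t\<bar> \<le> B"
  shows "\<bar>g a - g b\<bar> \<le> B * \<bar>a - b\<bar>"
proof -
  have main: "\<bar>g y - g x\<bar> \<le> B * (y - x)" if "x < y" "\<And>t. x \<le> t \<Longrightarrow> t \<le> y \<Longrightarrow> \<bar>g' t\<bar> \<le> B" for x y
  proof -
    obtain z where z: "x < z" "z < y" "g y - g x = (y - x) * g' z" using MVT2[OF \<open>x < y\<close> d] by blast
    have "\<bar>g y - g x\<bar> = (y - x) * \<bar>g' z\<bar>" using z \<open>x < y\<close> by (simp add: abs_mult)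
    also have "\<dots> \<le> (y - x) * B" using that z by (intro mult_left_mono) auto
    finally show ?thesis by (simp add: mult.commute)
  qed
  consider "a < b" | "a = b" | "b < a" by linarith
  then show ?thesis
  proof cases
    case 1 then show ?thesis using main[of a b] bd by (simp add: abs_minus_commute)
  next
    case 2 then show ?thesis by simp
  next
    case 3 then show ?thesis using main[of b a] bd by simp
  qed
qed

locale f2fn =
  fixes F F1 F2 :: "real \<Rightarrow> real"
  assumes d1: "\<And>x. DERIV F x :> F1 x" and d2: "\<And>x. DERIV F1 x :> F2 x"
begin

lemma dshift: "DERIV (\<lambda>c. F (c + t)) c :> F1 (c + t)" "DERIV (\<lambda>c. F1 (c + t)) c :> F2 (c + t)"
  using d1[of "c + t"] d2[of "c + t"] by (simp_all add: DERIV_shift)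

lemma P2:
  assumes K: "\<And>t. \<bar>t\<bar> \<le> R + S \<Longrightarrow> \<bar>F2 t\<bar> \<le> K"
    and c: "\<bar>c\<bar> \<le> R" "\<bar>s\<bar> \<le> S" "\<bar>s'\<bar> \<le> S"
  shows "\<bar>F1 (c + s) - F1 (c + s')\<bar> \<le> K * \<bar>s - s'\<bar>"
proof -
  have "\<bar>F1 (c + s) - F1 (c + s')\<bar> \<le> K * \<bar>(c + s) - (c + s')\<bar>"
    by (rule mvt_bound1[OF d2]) (rule K, use c in \<open>auto simp: min_def max_def split: if_splits\<close>)
  then show ?thesis by simp
qed

lemma P1:
  assumes W: "\<And>c s. \<bar>c\<bar> \<le> R \<Longrightarrow> \<bar>s\<bar> \<le> S \<Longrightarrow> \<bar>F2 (c + s) - F2 c\<bar> \<le> \<omega>"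
    and c: "\<bar>c\<bar> \<le> R" "\<bar>s\<bar> \<le> S"
  shows "\<bar>F1 (c + s) - F1 c - F2 c * s\<bar> \<le> \<omega> * \<bar>s\<bar>"
proof -
  have dg: "DERIV (\<lambda>\<sigma>. F1 (c + \<sigma>) - F2 c * \<sigma>) \<sigma> :> F2 (c + \<sigma>) - F2 c" for \<sigma>
  proof -
    have "DERIV (\<lambda>\<sigma>. F1 (\<sigma> + c)) \<sigma> :> F2 (\<sigma> + c)" using dshift(2)[of c \<sigma>] by simp
    then have "DERIV (\<lambda>\<sigma>. F1 (c + \<sigma>)) \<sigma> :> F2 (c + \<sigma>)" by (simp add: add.commute)
    moreover have "DERIV (\<lambda>\<sigma>. F2 c * \<sigma>) \<sigma> :> F2 c" using DERIV_cmult[OF DERIV_ident, of "F2 c"] by simp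
    ultimately show ?thesis by (rule DERIV_diff)
  qed
  have "\<bar>(F1 (c + s) - F2 c * s) - (F1 (c + 0) - F2 c * 0)\<bar> \<le> \<omega> * \<bar>s - 0\<bar>"
    by (rule mvt_bound1[OF dg]) (rule W, use c in \<open>auto simp: min_def max_def split: if_splits\<close>)
  then show ?thesis by simp
qed

lemma P3:
  assumes K: "\<And>t. \<bar>t\<bar> \<le> R + S \<Longrightarrow> \<bar>F2 t\<bar> \<le> K" and K0: "0 \<le> K"
    and c: "\<bar>a\<bar> \<le> R" "\<bar>t\<bar> \<le> S" "\<bar>t'\<bar> \<le> S"
  shows "\<bar>(F (a + t) - F a - F1 a * t) - (F (a + t') - F a - F1 a * t')\<bar> \<le> K * S * \<bar>t - t'\<bar>"
proof -
  have dg: "DERIV (\<lambda>\<sigma>. F (a + \<sigma>) - F1 a * \<sigma>) \<sigma> :> F1 (a + \<sigma>) - F1 a" for \<sigma>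
  proof -
    have "DERIV (\<lambda>\<sigma>. F (\<sigma> + a)) \<sigma> :> F1 (\<sigma> + a)" using dshift(1)[of a \<sigma>] by simp
    then have "DERIV (\<lambda>\<sigma>. F (a + \<sigma>)) \<sigma> :> F1 (a + \<sigma>)" by (simp add: add.commute)
    moreover have "DERIV (\<lambda>\<sigma>. F1 a * \<sigma>) \<sigma> :> F1 a" using DERIV_cmult[OF DERIV_ident, of "F1 a"] by simp
    ultimately show ?thesis by (rule DERIV_diff)
  qed
  have "\<bar>(F (a + t) - F1 a * t) - (F (a + t') - F1 a * t')\<bar> \<le> (K * S) * \<bar>t - t'\<bar>"
  proof (rule mvt_bound1[OF dg])
    fix \<sigma> assume s: "min t t' \<le> \<sigma>" "\<sigma> \<le> max t t'"
    then have "\<bar>\<sigma>\<bar> \<le> S" using c by (auto simp: min_def max_def split: if_splits)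
    have "\<bar>F1 (a + \<sigma>) - F1 (a + 0)\<bar> \<le> K * \<bar>\<sigma> - 0\<bar>" using P2[OF K c(1) \<open>\<bar>\<sigma>\<bar> \<le> S\<close>, of 0] c by simp
    also have "\<dots> \<le> K * S" using \<open>\<bar>\<sigma>\<bar> \<le> S\<close> K0 by (simp add: mult_left_mono)
    finally show "\<bar>F1 (a + \<sigma>) - F1 a\<bar> \<le> K * S" by simp
  qed
  then show ?thesis by (simp add: algebra_simps)
qed

lemma P4:
  assumes W: "\<And>c s. \<bar>c\<bar> \<le> R \<Longrightarrow> \<bar>s\<bar> \<le> S \<Longrightarrow> \<bar>F2 (c + s) - F2 c\<bar> \<le> \<omega>" and W0: "0 \<le> \<omega>"
    and c: "\<bar>a\<bar> \<le> R" "\<bar>a'\<bar> \<le> R" "\<bar>t\<bar> \<le> S"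
  shows "\<bar>(F (a + t) - F a - F1 a * t) - (F (a' + t) - F a' - F1 a' * t)\<bar> \<le> \<omega> * S * \<bar>a - a'\<bar>"
proof (rule mvt_bound1[where g = "\<lambda>c. F (c + t) - F c - F1 c * t"])
  fix c show "DERIV (\<lambda>c. F (c + t) - F c - F1 c * t) c :> F1 (c + t) - F1 c - F2 c * t"
    by (intro DERIV_diff dshift d1 DERIV_cmult_right d2)
next
  fix c assume s: "min a a' \<le> c" "c \<le> max a a'"
  then have cR: "\<bar>c\<bar> \<le> R" using c by (auto simp: min_def max_def split: if_splits)
  have "\<bar>F1 (c + t) - F1 c - F2 c * t\<bar> \<le> \<omega> * \<bar>t\<bar>" by (rule P1[OF W cR c(3)])
  also have "\<dots> \<le> \<omega> * S" using c W0 by (simp add: mult_left_mono)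
  finally show "\<bar>F1 (c + t) - F1 c - F2 c * t\<bar> \<le> \<omega> * S" .
qed

lemma P5:
  assumes W: "\<And>c s. \<bar>c\<bar> \<le> R \<Longrightarrow> \<bar>s\<bar> \<le> S \<Longrightarrow> \<bar>F2 (c + s) - F2 c\<bar> \<le> \<omega>"
    and c: "\<bar>a\<bar> \<le> R" "\<bar>a'\<bar> \<le> R" "\<bar>t\<bar> \<le> S"
  shows "\<bar>(F1 (a + t) - F1 a) - (F1 (a' + t) - F1 a')\<bar> \<le> \<omega> * \<bar>a - a'\<bar>"
proof (rule mvt_bound1[where g = "\<lambda>c. F1 (c + t) - F1 c"])
  fix c show "DERIV (\<lambda>c. F1 (c + t) - F1 c) c :> F2 (c + t) - F2 c"
    by (intro DERIV_diff dshift d2)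
next
  fix c assume s: "min a a' \<le> c" "c \<le> max a a'"
  then have cR: "\<bar>c\<bar> \<le> R" using c by (auto simp: min_def max_def split: if_splits)
  show "\<bar>F2 (c + t) - F2 c\<bar> \<le> \<omega>" by (rule W[OF cR c(3)])
qed

end


context f2fn
begin

lemma phi_fun:
  fixes m r :: "real^('d::finite) \<Rightarrow> real"
  assumes m: "sbd m R" "lip m Lm" and r: "sbd r S" "lip r Lr"
    and K: "\<And>t. \<bar>t\<bar> \<le> R + S \<Longrightarrow> \<bar>F2 t\<bar> \<le> K" and K0: "0 \<le> K"
    and W: "\<And>c s. \<bar>c\<bar> \<le> R \<Longrightarrow> \<bar>s\<bar> \<le> S \<Longrightarrow> \<bar>F2 (c + s) - F2 c\<bar> \<le> \<omega>" and W0: "0 \<le> \<omega>"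
  shows "sbd (\<lambda>x. F (m x + r x) - F (m x) - F1 (m x) * r x) (K * S * S)"
    and "lip (\<lambda>x. F (m x + r x) - F (m x) - F1 (m x) * r x) (\<omega> * S * Lm + K * S * Lr)"
proof -
  have S0: "0 \<le> S" using sbd_nonneg[OF r(1)] .
  have mb: "\<bar>m x\<bar> \<le> R" for x using m(1) unfolding sbd_def by blast
  have rb: "\<bar>r x\<bar> \<le> S" for x using r(1) unfolding sbd_def by blast
  show "sbd (\<lambda>x. F (m x + r x) - F (m x) - F1 (m x) * r x) (K * S * S)"
    unfolding sbd_def
  proof
    fix x
    have "\<bar>(F (m x + r x) - F (m x) - F1 (m x) * r x) - (F (m x + 0) - F (m x) - F1 (m x) * 0)\<bar> \<le> K * S * \<bar>r x - 0\<bar>"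
      using P3[OF K K0 mb[of x] rb[of x], where t'=0] S0 by simp
    also have "\<dots> \<le> K * S * S" using rb[of x] K0 S0 by (simp add: mult_left_mono)
    finally show "\<bar>F (m x + r x) - F (m x) - F1 (m x) * r x\<bar> \<le> K * S * S" by simp
  qed
  show "lip (\<lambda>x. F (m x + r x) - F (m x) - F1 (m x) * r x) (\<omega> * S * Lm + K * S * Lr)"
    unfolding lip_def
  proof (intro allI)
    fix x y
    have A: "\<bar>(F (m x + r x) - F (m x) - F1 (m x) * r x) - (F (m y + r x) - F (m y) - F1 (m y) * r x)\<bar>
       \<le> \<omega> * S * \<bar>m x - m y\<bar>" by (rule P4[OF W W0 mb mb rb])
    have B: "\<bar>(F (m y + r x) - F (m y) - F1 (m y) * r x) - (F (m y + r y) - F (m y) - F1 (m y) * r y)\<bar>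
       \<le> K * S * \<bar>r x - r y\<bar>" by (rule P3[OF K K0 mb rb rb])
    have "\<omega> * S * \<bar>m x - m y\<bar> \<le> \<omega> * S * (Lm * dist x y)" using m(2) W0 S0 unfolding lip_def
      by (intro mult_left_mono) auto
    moreover have "K * S * \<bar>r x - r y\<bar> \<le> K * S * (Lr * dist x y)" using r(2) K0 S0 unfolding lip_def
      by (intro mult_left_mono) auto
    ultimately show "\<bar>(F (m x + r x) - F (m x) - F1 (m x) * r x) - (F (m y + r y) - F (m y) - F1 (m y) * r y)\<bar>
       \<le> (\<omega> * S * Lm + K * S * Lr) * dist x y" using A B by (simp add: algebra_simps)
  qed
qed

lemma phi2_fun:
  fixes m r :: "real^('d::finite) \<Rightarrow> real"
  assumes m: "sbd m R" "lip m Lm" and r: "sbd r S" "lip r Lr"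
    and K: "\<And>t. \<bar>t\<bar> \<le> R + S \<Longrightarrow> \<bar>F2 t\<bar> \<le> K" and K0: "0 \<le> K"
    and W: "\<And>c s. \<bar>c\<bar> \<le> R \<Longrightarrow> \<bar>s\<bar> \<le> S \<Longrightarrow> \<bar>F2 (c + s) - F2 c\<bar> \<le> \<omega>" and W0: "0 \<le> \<omega>"
  shows "sbd (\<lambda>x. F1 (m x + r x) - F1 (m x)) (K * S)"
    and "lip (\<lambda>x. F1 (m x + r x) - F1 (m x)) (\<omega> * Lm + K * Lr)"
proof -
  have S0: "0 \<le> S" using sbd_nonneg[OF r(1)] .
  have mb: "\<bar>m x\<bar> \<le> R" for x using m(1) unfolding sbd_def by blast
  have rb: "\<bar>r x\<bar> \<le> S" for x using r(1) unfolding sbd_def by blast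
  show "sbd (\<lambda>x. F1 (m x + r x) - F1 (m x)) (K * S)"
    unfolding sbd_def
  proof
    fix x
    have "\<bar>F1 (m x + r x) - F1 (m x + 0)\<bar> \<le> K * \<bar>r x - 0\<bar>"
      using P2[OF K mb[of x] rb[of x], where s'=0] S0 by simp
    also have "\<dots> \<le> K * S" using rb[of x] K0 by (simp add: mult_left_mono)
    finally show "\<bar>F1 (m x + r x) - F1 (m x)\<bar> \<le> K * S" by simp
  qed
  show "lip (\<lambda>x. F1 (m x + r x) - F1 (m x)) (\<omega> * Lm + K * Lr)"
    unfolding lip_def
  proof (intro allI)
    fix x y
    have A: "\<bar>(F1 (m x + r x) - F1 (m x)) - (F1 (m y + r x) - F1 (m y))\<bar> \<le> \<omega> * \<bar>m x - m y\<bar>"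
      by (rule P5[OF W mb mb rb])
    have B: "\<bar>F1 (m y + r x) - F1 (m y + r y)\<bar> \<le> K * \<bar>r x - r y\<bar>" by (rule P2[OF K mb rb rb])
    have "\<omega> * \<bar>m x - m y\<bar> \<le> \<omega> * (Lm * dist x y)" using m(2) W0 unfolding lip_def
      by (intro mult_left_mono) auto
    moreover have "K * \<bar>r x - r y\<bar> \<le> K * (Lr * dist x y)" using r(2) K0 unfolding lip_def
      by (intro mult_left_mono) auto
    ultimately show "\<bar>(F1 (m x + r x) - F1 (m x)) - (F1 (m y + r y) - F1 (m y))\<bar>
       \<le> (\<omega> * Lm + K * Lr) * dist x y" using A B by (simp add: algebra_simps)
  qed
qed

lemma F_lip:
  fixes m :: "real^('d::finite) \<Rightarrow> real"
  assumes "lip m Lm" "\<And>t. \<bar>F1 t\<bar> \<le> K1"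
  shows "lip (\<lambda>x. F (m x)) (K1 * Lm)"
  unfolding lip_def
proof (intro allI)
  fix x y
  have "\<bar>F (m x) - F (m y)\<bar> \<le> K1 * \<bar>m x - m y\<bar>" by (rule mvt_bound1[OF d1 assms(2)])
  also have "\<dots> \<le> K1 * (Lm * dist x y)" using assms unfolding lip_def
    by (intro mult_left_mono) (auto intro: order_trans[OF abs_ge_zero])
  finally show "\<bar>F (m x) - F (m y)\<bar> \<le> K1 * Lm * dist x y" by simp
qed

lemma F1_lip:
  fixes m :: "real^('d::finite) \<Rightarrow> real"
  assumes "sbd m R" "lip m Lm" "\<And>t. \<bar>t\<bar> \<le> R \<Longrightarrow> \<bar>F2 t\<bar> \<le> K" "0 \<le> K"
  shows "lip (\<lambda>x. F1 (m x)) (K * Lm)"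
  unfolding lip_def
proof (intro allI)
  fix x y
  have "\<bar>F1 (m x) - F1 (m y)\<bar> \<le> K * \<bar>m x - m y\<bar>"
  proof (rule mvt_bound1[OF d2])
    fix t assume "min (m x) (m y) \<le> t" "t \<le> max (m x) (m y)"
    then have "\<bar>t\<bar> \<le> R" using assms(1) unfolding sbd_def
      by (auto simp: min_def max_def abs_le_iff split: if_splits) (smt (verit))+
    then show "\<bar>F2 t\<bar> \<le> K" by (rule assms(3))
  qed
  also have "\<dots> \<le> K * (Lm * dist x y)" using assms unfolding lip_def
    by (intro mult_left_mono) auto
  finally show "\<bar>F1 (m x) - F1 (m y)\<bar> \<le> K * Lm * dist x y" by simp
qed

end


lemma IP_add2: "(\<And>x. v differentiable (at x)) \<Longrightarrow> (\<And>x. w differentiable (at x)) \<Longrightarrow>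
  IP u (\<lambda>x. v x + w x) x = IP u v x + IP u w x"
  unfolding IP_def by (simp add: grad_add sum.distrib algebra_simps)
lemma IP_diff2: "(\<And>x. v differentiable (at x)) \<Longrightarrow> (\<And>x. w differentiable (at x)) \<Longrightarrow>
  IP u (\<lambda>x. v x - w x) x = IP u v x - IP u w x"
  unfolding IP_def by (simp add: grad_diff sum_subtractf algebra_simps)
lemma IP_cmult2: "(\<And>x. v differentiable (at x)) \<Longrightarrow> IP u (\<lambda>x. c * v x) x = c * IP u v x"
  unfolding IP_def by (simp add: grad_cmult sum_distrib_left algebra_simps)
lemma IP_sym: "IP u v x = IP v u x" unfolding IP_def by (simp add: mult.commute)

lemma Dt_add1: "(\<And>x. r differentiable (at x)) \<Longrightarrow> (\<And>x. s differentiable (at x)) \<Longrightarrow>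
  Dt (\<lambda>x. r x + s x) u x = Dt r u x + Dt s u x"
  unfolding Dt_def by (simp add: grad_add sum.distrib algebra_simps)
lemma Dt_diff1: "(\<And>x. r differentiable (at x)) \<Longrightarrow> (\<And>x. s differentiable (at x)) \<Longrightarrow>
  Dt (\<lambda>x. r x - s x) u x = Dt r u x - Dt s u x"
  unfolding Dt_def by (simp add: grad_diff sum_subtractf algebra_simps)
lemma Dt_cmult1: "(\<And>x. r differentiable (at x)) \<Longrightarrow> Dt (\<lambda>x. c * r x) u x = c * Dt r u x"
  unfolding Dt_def by (simp add: grad_cmult sum_distrib_left algebra_simps)
lemma Dt_add2: "tw v \<Longrightarrow> tw w \<Longrightarrow> Dt r (\<lambda>x. v x + w x) x = Dt r v x + Dt r w x"
  unfolding Dt_def by (simp add: grad_add hess_add tw_d1 sum.distrib algebra_simps)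
lemma Dt_diff2: "tw v \<Longrightarrow> tw w \<Longrightarrow> Dt r (\<lambda>x. v x - w x) x = Dt r v x - Dt r w x"
  unfolding Dt_def by (simp add: grad_diff hess_diff tw_d1 sum_subtractf algebra_simps)
lemma Dt_cmult2: "tw v \<Longrightarrow> Dt r (\<lambda>x. c * v x) x = c * Dt r v x"
  unfolding Dt_def by (simp add: grad_cmult hess_cmult tw_d1 sum_distrib_left algebra_simps)

lemma Z_bound:
  assumes a: "0 < a" "a \<le> 1" and g1: "sbd g1 S1" "lip g1 L1" "0 \<le> L1" and g2: "sbd g2 S2" "hol b g2 T2"
  shows "Znorm a b (g1, g2) \<le> 3 * S1 + L1 + S2 + T2"
proof -
  have "C0_norm a g1 \<le> S1 + (L1 + 2 * S1)" by (rule C0_norm_le[OF g1(1) lip_hol[OF a g1]])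
  moreover have "C0_norm b g2 \<le> S2 + T2" by (rule C0_norm_le[OF g2])
  ultimately show ?thesis unfolding Znorm_def by simp
qed

lemma Z_mem:
  assumes a: "0 < a" "a \<le> 1" "0 < b" and g1: "sbd g1 S1" "lip g1 L1" "0 \<le> L1" and g2: "hol b g2 T2"
    and p: "periodic g1" "periodic g2"
  shows "(g1, g2) \<in> Zsp a b"
  unfolding Zsp_def using C0_mem[OF p(1) a(1) lip_hol[OF a(1) a(2) g1]] C0_mem[OF p(2) a(3) g2] by simp

lemma per_comp: "periodic m \<Longrightarrow> periodic (\<lambda>x. g (m x))" unfolding periodic_def by simp

lemma c2_N_nonneg: "u \<in> C2 b \<Longrightarrow> 0 \<le> C2_norm b u"
  using c2fn.N0 c2fn.N_def c2fn.intro by metis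

lemma cont_bound_interval:
  fixes g :: "real \<Rightarrow> real"
  assumes "continuous_on UNIV g"
  shows "\<exists>K\<ge>0. \<forall>t. \<bar>t\<bar> \<le> R \<longrightarrow> \<bar>g t\<bar> \<le> K"
proof -
  have "compact (g ` {-R..R})" using assms by (intro compact_continuous_image) (auto intro: continuous_on_subset)
  then obtain B where B: "\<forall>y\<in>g ` {-R..R}. norm y \<le> B" using compact_imp_bounded bounded_iff by blast
  show ?thesis
  proof (intro exI[of _ "max B 0"] conjI allI impI)
    fix t assume "\<bar>t\<bar> \<le> R"
    then have "t \<in> {-R..R}" by (auto simp: abs_le_iff)
    then have "\<bar>g t\<bar> \<le> B" using B by auto
    then show "\<bar>g t\<bar> \<le> max B 0" by linarith
  qed simp
qed

lemma unif_cont_interval: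
  fixes g :: "real \<Rightarrow> real"
  assumes "continuous_on UNIV g" "0 < e"
  shows "\<exists>\<delta>>0. \<delta> \<le> 1 \<and> (\<forall>c s. \<bar>c\<bar> \<le> R \<longrightarrow> \<bar>s\<bar> \<le> \<delta> \<longrightarrow> \<bar>g (c + s) - g c\<bar> \<le> e)"
proof -
  have "uniformly_continuous_on {-R-1..R+1} g"
    using assms(1) by (intro compact_uniformly_continuous) (auto intro: continuous_on_subset)
  then obtain d where d: "d > 0" "\<forall>x\<in>{-R-1..R+1}. \<forall>x'\<in>{-R-1..R+1}. dist x' x < d \<longrightarrow> dist (g x') (g x) < e"
    using assms(2) unfolding uniformly_continuous_on_def by blast
  show ?thesis
  proof (intro exI[of _ "min 1 (d/2)"] conjI allI impI)
    fix c s assume cs: "\<bar>c\<bar> \<le> R" "\<bar>s\<bar> \<le> min 1 (d/2)"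
    have "dist (g (c + s)) (g c) < e"
      using d(2) cs d(1) by (auto simp: dist_real_def abs_le_iff)
    then show "\<bar>g (c + s) - g c\<bar> \<le> e" by (simp add: dist_real_def)
  qed (use d in auto)
qed


lemma Xsp_iff: "(p::('d::finite) fpair) \<in> Xsp \<beta> \<gamma> \<longleftrightarrow> fst p \<in> C2 \<beta> \<and> snd p \<in> C2 \<gamma>"
  unfolding Xsp_def by (cases p) auto

locale fset =
  fixes f :: "real \<Rightarrow> real" and \<alpha> \<beta> \<gamma> :: real
  assumes alpha: "0 < \<alpha>" "\<alpha> < 1"
    and f_diff: "\<forall>x. f differentiable (at x)"
    and f_bdd: "bounded (range f)" "bounded (range (deriv f))"
    and f_C2: "\<forall>x. deriv f differentiable (at x)" "continuous_on UNIV (deriv (deriv f))"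
    and exps: "0 < \<gamma>" "\<gamma> \<le> \<beta>" "\<beta> \<le> \<alpha>"
begin

lemma beta0: "0 < \<beta>" using exps by linarith
lemma beta1: "\<beta> \<le> 1" using exps alpha by linarith
lemma alpha1: "\<alpha> \<le> 1" using alpha by linarith

sublocale ff: f2fn f "deriv f" "deriv (deriv f)"
  by unfold_locales (simp_all add: DERIV_deriv_iff_real_differentiable f_diff f_C2(1))

definition F0 where "F0 = (SOME B. 0 \<le> B \<and> (\<forall>t. \<bar>f t\<bar> \<le> B))"
definition K1 where "K1 = (SOME B. 0 \<le> B \<and> (\<forall>t. \<bar>deriv f t\<bar> \<le> B))"
definition K2 where "K2 R = (SOME K. 0 \<le> K \<and> (\<forall>t. \<bar>t\<bar> \<le> R \<longrightarrow> \<bar>deriv (deriv f) t\<bar> \<le> K))"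

lemma bnd_ex: fixes g :: "real \<Rightarrow> real" shows "bounded (range g) \<Longrightarrow> \<exists>B. 0 \<le> B \<and> (\<forall>t. \<bar>g t\<bar> \<le> (B::real))"
proof -
  assume "bounded (range g)"
  then obtain B where "\<forall>y\<in>range g. norm y \<le> B" using bounded_iff by blast
  then have "\<bar>g t\<bar> \<le> max B 0" for t
  proof -
    assume "\<forall>y\<in>range g. norm y \<le> B"
    then have "norm (g t) \<le> B" by blast
    then show ?thesis by (simp add: le_max_iff_disj)
  qed
  then show ?thesis by (intro exI[of _ "max B 0"]) auto
qed


lemma F0': "0 \<le> F0 \<and> (\<forall>t. \<bar>f t\<bar> \<le> F0)"
  unfolding F0_def by (rule someI_ex[OF bnd_ex[OF f_bdd(1)]])
lemma F0: "0 \<le> F0" "\<bar>f t\<bar> \<le> F0" using F0' by blast+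
lemma K1': "0 \<le> K1 \<and> (\<forall>t. \<bar>deriv f t\<bar> \<le> K1)"
  unfolding K1_def by (rule someI_ex[OF bnd_ex[OF f_bdd(2)]])
lemma K1: "0 \<le> K1" "\<bar>deriv f t\<bar> \<le> K1" using K1' by blast+
lemma K2': "0 \<le> K2 R \<and> (\<forall>t. \<bar>t\<bar> \<le> R \<longrightarrow> \<bar>deriv (deriv f) t\<bar> \<le> K2 R)"
  unfolding K2_def by (rule someI_ex[OF cont_bound_interval[OF f_C2(2)]])
lemma K2: "0 \<le> K2 R" "\<bar>t\<bar> \<le> R \<Longrightarrow> \<bar>deriv (deriv f) t\<bar> \<le> K2 R" using K2'[of R] by blast+

end

locale setting = fset f \<alpha> \<beta> \<gamma> for f :: "real \<Rightarrow> real" and \<alpha> \<beta> \<gamma> :: real +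
  fixes lam :: real and m0 :: "real^('d::finite) \<Rightarrow> real"
  assumes m0C: "m0 \<in> C0 \<alpha>"
begin

lemma m0_per: "periodic m0" and m0_cont: "continuous_on UNIV m0" and m0_hold: "holder \<alpha> m0"
  using m0C unfolding C0_def by auto

definition S0 where "S0 = supnorm m0"
definition H0 where "H0 = max 0 (SOME C. \<forall>x y. norm (m0 x - m0 y) \<le> C * dist x y powr \<alpha>)"

lemma m0_sbd: "sbd m0 S0"
  unfolding sbd_def S0_def using periodic_bdd(2)[OF m0_per m0_cont] by simp
lemma m0_hol: "hol \<alpha> m0 H0"
proof -
  have "\<forall>x y. norm (m0 x - m0 y) \<le> (SOME C. \<forall>x y. norm (m0 x - m0 y) \<le> C * dist x y powr \<alpha>) * dist x y powr \<alpha>"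
    using someI_ex[OF m0_hold[unfolded holder_def]] .
  moreover have "(SOME C. \<forall>x y. norm (m0 x - m0 y) \<le> C * dist x y powr \<alpha>) * dist x y powr \<alpha>
     \<le> H0 * dist x y powr \<alpha>" for x y :: "real^'d" unfolding H0_def by (intro mult_right_mono) auto
  ultimately show ?thesis unfolding hol_def real_norm_def by (meson order_trans)
qed
lemma H0: "0 \<le> H0" unfolding H0_def by simp
lemma m0_hol_b: "hol \<beta> m0 (H0 + 2 * S0)"
  by (rule hol_mono[OF beta0 _ m0_sbd m0_hol H0]) (use exps in auto)


end


context setting
begin

lemma G_in_Z:
  assumes p: "p \<in> Xsp \<beta> \<gamma>"
  shows "Gmap f lam m0 p \<in> Zsp \<alpha> \<beta>"
proof -
  obtain u m where pu: "p = (u, m)" by (cases p)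
  have u: "u \<in> C2 \<beta>" and m: "m \<in> C2 \<gamma>" using p unfolding pu Xsp_def by auto
  interpret U: c2fn u \<beta> by (unfold_locales, rule u)
  interpret M: c2fn m \<gamma> by (unfold_locales, rule m)
  have G: "Gmap f lam m0 p = ((\<lambda>x. 1/2 * IP u u x - f (m x)), (\<lambda>x. - Dt m u x - lam * m0 x))"
    using Gmap_eq[of p] pu U.tw M.diff by simp
  have N: "0 \<le> C2_norm \<beta> u" "0 \<le> C2_norm \<gamma> m" using U.N0 M.N0 by (simp_all add: U.N_def M.N_def)
  have s1: "sbd (\<lambda>x. 1/2 * IP u u x - f (m x)) (\<bar>1/2\<bar> * (real CARD('d) * (C2_norm \<beta> u * C2_norm \<beta> u)) + F0)"
    by (intro sbd_diff sbd_cmult IP_bounds(1)[OF u u]) (simp add: sbd_def F0)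
  have l1: "lip (\<lambda>x. 1/2 * IP u u x - f (m x)) (\<bar>1/2\<bar> * (real CARD('d) * (2 * C2_norm \<beta> u * C2_norm \<beta> u)) + K1 * C2_norm \<gamma> m)"
    by (intro lip_diff lip_cmult IP_bounds(2)[OF u u] ff.F_lip K1) (use M.lip_u M.N_def in simp)
  have h2: "hol \<beta> (\<lambda>x. - Dt m u x - lam * m0 x)
      (real CARD('d) * (10 * C2_norm \<gamma> m * C2_norm \<beta> u) + \<bar>lam\<bar> * (H0 + 2 * S0))"
    by (intro hol_diff hol_neg hol_cmult Dt_bounds(2)[OF m u beta0] m0_hol_b) (use beta1 in auto)
  have p1: "periodic (\<lambda>x. 1/2 * IP u u x - f (m x))"
    using IP_per[OF U.per U.per] M.per unfolding periodic_def by simp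
  have p2: "periodic (\<lambda>x. - Dt m u x - lam * m0 x)"
    using Dt_per[OF M.per U.per] m0_per unfolding periodic_def by simp
  show ?thesis unfolding G
    by (rule Z_mem[OF alpha(1) alpha1 beta0 s1 l1 _ h2 p1 p2]) (use N K1 in simp)
qed

end


context fset
begin

lemma X_parts:
  fixes p :: "('d::finite) fpair"
  assumes "p \<in> Xsp \<beta> \<gamma>"
  shows "fst p \<in> C2 \<beta>" "snd p \<in> C2 \<gamma>" "tw (fst p)" "\<And>x. snd p differentiable (at x)"
    "Xnorm \<beta> \<gamma> p = C2_norm \<beta> (fst p) + C2_norm \<gamma> (snd p)"
    "0 \<le> C2_norm \<beta> (fst p)" "0 \<le> C2_norm \<gamma> (snd p)"
proof -
  show u: "fst p \<in> C2 \<beta>" and m: "snd p \<in> C2 \<gamma>" using assms unfolding Xsp_def by (auto simp: mem_Times_iff)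
  show "tw (fst p)" using c2fn.tw[OF c2fn.intro[OF u]] .
  show "\<And>x. snd p differentiable (at x)" using c2fn.diff[OF c2fn.intro[OF m]] .
  show "Xnorm \<beta> \<gamma> p = C2_norm \<beta> (fst p) + C2_norm \<gamma> (snd p)" unfolding Xnorm_def ..
  show "0 \<le> C2_norm \<beta> (fst p)" "0 \<le> C2_norm \<gamma> (snd p)" using c2_N_nonneg u m by auto
qed

lemma dG_eq:
  fixes p h :: "('d::finite) fpair"
  assumes "p \<in> Xsp \<beta> \<gamma>" "h \<in> Xsp \<beta> \<gamma>"
  shows "dGmap f p h = ((\<lambda>x. IP (fst p) (fst h) x - deriv f (snd p x) * snd h x),
                          (\<lambda>x. - Dt (snd h) (fst p) x - Dt (snd p) (fst h) x))"
  by (rule dGmap_eq) (use X_parts[OF assms(1)] X_parts[OF assms(2)] in auto)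

lemma dG_bound:
  fixes p h :: "('d::finite) fpair"
  assumes p: "p \<in> Xsp \<beta> \<gamma>" and h: "h \<in> Xsp \<beta> \<gamma>"
  defines "Nu \<equiv> C2_norm \<beta> (fst p)" and "Nm \<equiv> C2_norm \<gamma> (snd p)"
  defines "C \<equiv> 5 * real CARD('d) * Nu + 12 * real CARD('d) * Nm + 4 * K1 + K2 Nm * Nm + 12 * real CARD('d) * Nu"
  shows "dGmap f p h \<in> Zsp \<alpha> \<beta>" "Znorm \<alpha> \<beta> (dGmap f p h) \<le> C * Xnorm \<beta> \<gamma> h" "0 \<le> C"
proof -
  obtain u m where pu: "p = (u, m)" by (cases p)
  obtain v r where hv: "h = (v, r)" by (cases h)
  have u: "u \<in> C2 \<beta>" and m: "m \<in> C2 \<gamma>" using X_parts[OF p] pu by auto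
  have v: "v \<in> C2 \<beta>" and r: "r \<in> C2 \<gamma>" using X_parts[OF h] hv by auto
  interpret U: c2fn u \<beta> by (unfold_locales, rule u)
  interpret Mm: c2fn m \<gamma> by (unfold_locales, rule m)
  interpret V: c2fn v \<beta> by (unfold_locales, rule v)
  interpret R: c2fn r \<gamma> by (unfold_locales, rule r)
  define Nv where "Nv = C2_norm \<beta> v"
  define Nr where "Nr = C2_norm \<gamma> r"
  have NN: "Nu = U.N" "Nm = Mm.N" "Nv = V.N" "Nr = R.N"
    unfolding Nu_def Nm_def Nv_def Nr_def U.N_def Mm.N_def V.N_def R.N_def pu by simp_all
  have N0: "0 \<le> Nu" "0 \<le> Nm" "0 \<le> Nv" "0 \<le> Nr" unfolding NN using U.N0 Mm.N0 V.N0 R.N0 by auto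
  have XN: "Xnorm \<beta> \<gamma> h = Nv + Nr" unfolding Xnorm_def hv Nv_def Nr_def by simp
  have eq: "dGmap f p h = ((\<lambda>x. IP u v x - deriv f (m x) * r x), (\<lambda>x. - Dt r u x - Dt m v x))"
    using dG_eq[OF p h] pu hv by simp
  define d where "d = real CARD('d)"
  have d0: "0 \<le> d" unfolding d_def by simp
  have sIP: "sbd (IP u v) (d * (Nu * Nv))" using IP_bounds(1)[OF u v] unfolding d_def NN U.N_def V.N_def .
  have lIP: "lip (IP u v) (d * (2 * Nu * Nv))" using IP_bounds(2)[OF u v] unfolding d_def NN U.N_def V.N_def .
  have sF: "sbd (\<lambda>x. deriv f (m x)) K1" unfolding sbd_def using K1 by blast
  have lF: "lip (\<lambda>x. deriv f (m x)) (K2 Nm * Nm)"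
    unfolding NN by (rule ff.F1_lip[OF Mm.sbd_u Mm.lip_u]) (use K2 in auto)
  have s1: "sbd (\<lambda>x. IP u v x - deriv f (m x) * r x) (d * (Nu * Nv) + K1 * Nr)"
    using sbd_diff[OF sIP sbd_mult[OF sF R.sbd_u]] NN by simp
  have l1: "lip (\<lambda>x. IP u v x - deriv f (m x) * r x) (d * (2 * Nu * Nv) + (K1 * Nr + Nr * (K2 Nm * Nm)))"
    using lip_diff[OF lIP lip_mult[OF sF lF R.sbd_u R.lip_u]] NN by simp
  have L10: "0 \<le> d * (2 * Nu * Nv) + (K1 * Nr + Nr * (K2 Nm * Nm))"
    using N0 d0 K1 K2 by simp
  have s2: "sbd (\<lambda>x. - Dt r u x - Dt m v x) (d * (2 * Nr * Nu) + d * (2 * Nm * Nv))"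
    using sbd_diff[OF sbd_neg[OF Dt_bounds(1)[OF r u beta0 _ beta1]] Dt_bounds(1)[OF m v beta0 _ beta1]]
    unfolding d_def Nu_def Nm_def Nv_def Nr_def pu by simp
  have h2: "hol \<beta> (\<lambda>x. - Dt r u x - Dt m v x) (d * (10 * Nr * Nu) + d * (10 * Nm * Nv))"
    using hol_diff[OF hol_neg[OF Dt_bounds(2)[OF r u beta0 _ beta1]] Dt_bounds(2)[OF m v beta0 _ beta1]]
    unfolding d_def Nu_def Nm_def Nv_def Nr_def pu by simp
  have p1: "periodic (\<lambda>x. IP u v x - deriv f (m x) * r x)"
    using IP_per[OF U.per V.per] Mm.per R.per unfolding periodic_def by simp
  have p2: "periodic (\<lambda>x. - Dt r u x - Dt m v x)"
    using Dt_per[OF R.per U.per] Dt_per[OF Mm.per V.per] unfolding periodic_def by simp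
  show "dGmap f p h \<in> Zsp \<alpha> \<beta>" unfolding eq
    by (rule Z_mem[OF alpha(1) alpha1 beta0 s1 l1 L10 h2 p1 p2])
  have "Znorm \<alpha> \<beta> (dGmap f p h) \<le> 3 * (d * (Nu * Nv) + K1 * Nr) + (d * (2 * Nu * Nv) + (K1 * Nr + Nr * (K2 Nm * Nm)))
      + (d * (2 * Nr * Nu) + d * (2 * Nm * Nv)) + (d * (10 * Nr * Nu) + d * (10 * Nm * Nv))"
    unfolding eq by (rule Z_bound[OF alpha(1) alpha1 s1 l1 L10 s2 h2])
  also have "\<dots> = (5 * d * Nu + 12 * d * Nm) * Nv + (4 * K1 + K2 Nm * Nm + 12 * d * Nu) * Nr"
    by (simp add: algebra_simps)
  also have "\<dots> \<le> C * (Nv + Nr)" unfolding C_def d_def[symmetric]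
    using N0 d0 K1 K2[of Nm] by (simp add: algebra_simps mult_right_mono add_mono mult_nonneg_nonneg)
  finally show "Znorm \<alpha> \<beta> (dGmap f p h) \<le> C * Xnorm \<beta> \<gamma> h" unfolding XN .
  show "0 \<le> C" unfolding C_def using N0 K1 K2[of Nm] by simp
qed

end


context fset
begin

lemma X_add:
  fixes p h :: "('d::finite) fpair"
  assumes "p \<in> Xsp \<beta> \<gamma>" "h \<in> Xsp \<beta> \<gamma>"
  shows "padd p h \<in> Xsp \<beta> \<gamma>"
  using C2_add[OF X_parts(1)[OF assms(1)] X_parts(1)[OF assms(2)]]
    C2_add[OF X_parts(2)[OF assms(1)] X_parts(2)[OF assms(2)]]
  unfolding padd_def Xsp_def by simp

lemma X_sub:
  fixes p h :: "('d::finite) fpair"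
  assumes "p \<in> Xsp \<beta> \<gamma>" "h \<in> Xsp \<beta> \<gamma>"
  shows "psub p h \<in> Xsp \<beta> \<gamma>"
  using C2_diff[OF X_parts(1)[OF assms(1)] X_parts(1)[OF assms(2)]]
    C2_diff[OF X_parts(2)[OF assms(1)] X_parts(2)[OF assms(2)]]
  unfolding psub_def Xsp_def by simp

lemma dGmap_eq2:
  assumes "tw (fst p)" "\<And>x. snd p differentiable (at x)" "tw v" "\<And>x. r differentiable (at x)"
  shows "dGmap f p (v, r) = ((\<lambda>x. IP (fst p) v x - deriv f (snd p x) * r x),
                          (\<lambda>x. - Dt r (fst p) x - Dt (snd p) v x))"
  using dGmap_eq[of p "(v, r)" f] assms by simp

lemma dG_blb:
  fixes p :: "('d::finite) fpair"
  assumes p: "p \<in> Xsp \<beta> \<gamma>"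
  shows "bounded_linear_between (Xsp \<beta> \<gamma>) (Xnorm \<beta> \<gamma>) (Zsp \<alpha> \<beta>) (Znorm \<alpha> \<beta>) (dGmap f p)"
  unfolding bounded_linear_between_def
proof (intro conjI ballI allI)
  fix h :: "'d fpair" assume "h \<in> Xsp \<beta> \<gamma>"
  then show "dGmap f p h \<in> Zsp \<alpha> \<beta>" using dG_bound(1)[OF p] by blast
next
  fix h k :: "'d fpair" assume h: "h \<in> Xsp \<beta> \<gamma>" and k: "k \<in> Xsp \<beta> \<gamma>"
  note P = X_parts[OF p] and Hh = X_parts[OF h] and Kk = X_parts[OF k]
  have hk: "padd h k \<in> Xsp \<beta> \<gamma>" by (rule X_add[OF h k])
  show "dGmap f p (padd h k) = padd (dGmap f p h) (dGmap f p k)"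
    unfolding dG_eq[OF p hk] dG_eq[OF p h] dG_eq[OF p k]
    by (simp add: padd_def fun_eq_iff IP_add2 Dt_add1 Dt_add2 Hh Kk tw_d1 algebra_simps)
next
  fix h :: "'d fpair" and c :: real assume h: "h \<in> Xsp \<beta> \<gamma>"
  note P = X_parts[OF p] and Hh = X_parts[OF h]
  have "dGmap f p (pscale c h) = ((\<lambda>x. IP (fst p) (\<lambda>x. c * fst h x) x - deriv f (snd p x) * (c * snd h x)),
                          (\<lambda>x. - Dt (\<lambda>x. c * snd h x) (fst p) x - Dt (snd p) (\<lambda>x. c * fst h x) x))"
    unfolding pscale_def by (rule dGmap_eq2) (use P Hh tw_cmult in auto)
  then show "dGmap f p (pscale c h) = pscale c (dGmap f p h)"
    unfolding dG_eq[OF p h]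
    by (simp add: pscale_def fun_eq_iff IP_cmult2 Dt_cmult1 Dt_cmult2 Hh tw_d1 algebra_simps)
next
  show "\<exists>C. \<forall>h\<in>Xsp \<beta> \<gamma>. Znorm \<alpha> \<beta> (dGmap f p h) \<le> C * Xnorm \<beta> \<gamma> h"
    using dG_bound(2)[OF p] by blast
qed

end


lemma IP_add1: "(\<And>x. v differentiable (at x)) \<Longrightarrow> (\<And>x. w differentiable (at x)) \<Longrightarrow>
  IP (\<lambda>x. v x + w x) u x = IP v u x + IP w u x"
  unfolding IP_def by (simp add: grad_add sum.distrib algebra_simps)
lemma IP_diff1: "(\<And>x. v differentiable (at x)) \<Longrightarrow> (\<And>x. w differentiable (at x)) \<Longrightarrow>
  IP (\<lambda>x. v x - w x) u x = IP v u x - IP w u x"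
  unfolding IP_def by (simp add: grad_diff sum_subtractf algebra_simps)

context setting
begin

lemma rem_eq:
  assumes p: "p \<in> Xsp \<beta> \<gamma>" and h: "h \<in> Xsp \<beta> \<gamma>"
  shows "psub (psub (Gmap f lam m0 (padd p h)) (Gmap f lam m0 p)) (dGmap f p h) =
    ((\<lambda>x. 1/2 * IP (fst h) (fst h) x - (f (snd p x + snd h x) - f (snd p x) - deriv f (snd p x) * snd h x)),
     (\<lambda>x. - Dt (snd h) (fst h) x))"
proof -
  note P = X_parts[OF p] and Hh = X_parts[OF h]
  have ph: "padd p h \<in> Xsp \<beta> \<gamma>" by (rule X_add[OF p h])
  note PH = X_parts[OF ph]
  have G1: "Gmap f lam m0 (padd p h) = ((\<lambda>x. 1/2 * IP (\<lambda>x. fst p x + fst h x) (\<lambda>x. fst p x + fst h x) x - f (snd p x + snd h x)),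
        (\<lambda>x. - Dt (\<lambda>x. snd p x + snd h x) (\<lambda>x. fst p x + fst h x) x - lam * m0 x))"
    using Gmap_eq[OF PH(3) PH(4), of f lam m0] unfolding padd_def by simp
  have G0: "Gmap f lam m0 p = ((\<lambda>x. 1/2 * IP (fst p) (fst p) x - f (snd p x)),
        (\<lambda>x. - Dt (snd p) (fst p) x - lam * m0 x))"
    using Gmap_eq[OF P(3) P(4)] by simp
  have d1: "\<And>x. fst p differentiable (at x)" "\<And>x. fst h differentiable (at x)"
    using P(3) Hh(3) tw_d1 by auto
  have ip: "IP (\<lambda>x. fst p x + fst h x) (\<lambda>x. fst p x + fst h x) x
      = IP (fst p) (fst p) x + 2 * IP (fst p) (fst h) x + IP (fst h) (fst h) x" for x
    by (simp add: IP_add1 IP_add2 d1 IP_sym[of "fst h" "fst p"] differentiable_add)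
  have dt: "Dt (\<lambda>x. snd p x + snd h x) (\<lambda>x. fst p x + fst h x) x
      = Dt (snd p) (fst p) x + Dt (snd h) (fst p) x + Dt (snd p) (fst h) x + Dt (snd h) (fst h) x" for x
    by (simp add: Dt_add1 Dt_add2 P(3,4) Hh(3,4) tw_add)
  show ?thesis unfolding G1 G0 dG_eq[OF p h] psub_def fst_conv snd_conv ip dt
    by (simp add: fun_eq_iff algebra_simps)
qed

end


context fset
begin

lemma rem_bound:
  fixes p h :: "('d::finite) fpair"
  assumes p: "p \<in> Xsp \<beta> \<gamma>" and h: "h \<in> Xsp \<beta> \<gamma>"
    and Nr1: "C2_norm \<gamma> (snd h) \<le> 1"
    and W: "\<And>c s. \<bar>c\<bar> \<le> C2_norm \<gamma> (snd p) \<Longrightarrow> \<bar>s\<bar> \<le> C2_norm \<gamma> (snd h) \<Longrightarrow>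
             \<bar>deriv (deriv f) (c + s) - deriv (deriv f) c\<bar> \<le> \<epsilon>" and e0: "0 \<le> \<epsilon>"
  shows "Znorm \<alpha> \<beta> ((\<lambda>x. 1/2 * IP (fst h) (fst h) x - (f (snd p x + snd h x) - f (snd p x) - deriv f (snd p x) * snd h x)),
     (\<lambda>x. - Dt (snd h) (fst h) x))
     \<le> ((15 * real CARD('d) + 4 * K2 (C2_norm \<gamma> (snd p) + 1)) * Xnorm \<beta> \<gamma> h + \<epsilon> * C2_norm \<gamma> (snd p)) * Xnorm \<beta> \<gamma> h"
proof -
  obtain u m where pu: "p = (u, m)" by (cases p)
  obtain v r where hv: "h = (v, r)" by (cases h)
  have u: "u \<in> C2 \<beta>" and m: "m \<in> C2 \<gamma>" using X_parts[OF p] pu by auto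
  have v: "v \<in> C2 \<beta>" and r: "r \<in> C2 \<gamma>" using X_parts[OF h] hv by auto
  interpret Mm: c2fn m \<gamma> by (unfold_locales, rule m)
  interpret V: c2fn v \<beta> by (unfold_locales, rule v)
  interpret R: c2fn r \<gamma> by (unfold_locales, rule r)
  define Nm where "Nm = C2_norm \<gamma> m"
  define Nv where "Nv = C2_norm \<beta> v"
  define Nr where "Nr = C2_norm \<gamma> r"
  define K where "K = K2 (Nm + 1)"
  define d where "d = real CARD('d)"
  define X where "X = Xnorm \<beta> \<gamma> h"
  have NN: "Nm = Mm.N" "Nv = V.N" "Nr = R.N"
    unfolding Nm_def Nv_def Nr_def Mm.N_def V.N_def R.N_def by simp_all
  have N0: "0 \<le> Nm" "0 \<le> Nv" "0 \<le> Nr" unfolding NN using Mm.N0 V.N0 R.N0 by auto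
  have XN: "X = Nv + Nr" unfolding X_def Xnorm_def hv Nv_def Nr_def by simp
  have d0: "0 \<le> d" unfolding d_def by simp
  have K0: "0 \<le> K" unfolding K_def using K2 by simp
  have Nr1': "Nr \<le> 1" using Nr1 hv Nr_def by simp
  have sIP: "sbd (IP v v) (d * (Nv * Nv))" using IP_bounds(1)[OF v v] unfolding d_def Nv_def .
  have lIP: "lip (IP v v) (d * (2 * Nv * Nv))" using IP_bounds(2)[OF v v] unfolding d_def Nv_def .
  have Kb: "\<bar>deriv (deriv f) t\<bar> \<le> K" if "\<bar>t\<bar> \<le> Nm + Nr" for t
    unfolding K_def by (rule K2(2)) (use that Nr1' in linarith)
  have Wb: "\<bar>deriv (deriv f) (c + s) - deriv (deriv f) c\<bar> \<le> \<epsilon>" if "\<bar>c\<bar> \<le> Nm" "\<bar>s\<bar> \<le> Nr" for c s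
    using W[of c s] that pu hv Nm_def Nr_def by simp
  have sphi: "sbd (\<lambda>x. f (m x + r x) - f (m x) - deriv f (m x) * r x) (K * Nr * Nr)"
    using ff.phi_fun(1)[OF Mm.sbd_u Mm.lip_u R.sbd_u R.lip_u _ _ _ e0] Kb K0 Wb unfolding NN by blast
  have lphi: "lip (\<lambda>x. f (m x + r x) - f (m x) - deriv f (m x) * r x) (\<epsilon> * Nr * Nm + K * Nr * Nr)"
    using ff.phi_fun(2)[OF Mm.sbd_u Mm.lip_u R.sbd_u R.lip_u _ _ _ e0] Kb K0 Wb unfolding NN by blast
  have s1: "sbd (\<lambda>x. 1/2 * IP v v x - (f (m x + r x) - f (m x) - deriv f (m x) * r x)) (\<bar>1/2\<bar> * (d * (Nv * Nv)) + K * Nr * Nr)"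
    by (rule sbd_diff[OF sbd_cmult[OF sIP] sphi])
  have l1: "lip (\<lambda>x. 1/2 * IP v v x - (f (m x + r x) - f (m x) - deriv f (m x) * r x)) (\<bar>1/2\<bar> * (d * (2 * Nv * Nv)) + (\<epsilon> * Nr * Nm + K * Nr * Nr))"
    by (rule lip_diff[OF lip_cmult[OF lIP] lphi])
  have L10: "0 \<le> \<bar>1/2\<bar> * (d * (2 * Nv * Nv)) + (\<epsilon> * Nr * Nm + K * Nr * Nr)"
    using N0 d0 K0 e0 by simp
  have s2: "sbd (\<lambda>x. - Dt r v x) (d * (2 * Nr * Nv))"
    using sbd_neg[OF Dt_bounds(1)[OF r v beta0 _ beta1]] unfolding d_def Nv_def Nr_def by simp
  have h2: "hol \<beta> (\<lambda>x. - Dt r v x) (d * (10 * Nr * Nv))"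
    using hol_neg[OF Dt_bounds(2)[OF r v beta0 _ beta1]] unfolding d_def Nv_def Nr_def by simp
  have "Znorm \<alpha> \<beta> ((\<lambda>x. 1/2 * IP v v x - (f (m x + r x) - f (m x) - deriv f (m x) * r x)), (\<lambda>x. - Dt r v x))
     \<le> 3 * (\<bar>1/2\<bar> * (d * (Nv * Nv)) + K * Nr * Nr) + (\<bar>1/2\<bar> * (d * (2 * Nv * Nv)) + (\<epsilon> * Nr * Nm + K * Nr * Nr))
       + d * (2 * Nr * Nv) + d * (10 * Nr * Nv)"
    by (rule Z_bound[OF alpha(1) alpha1 s1 l1 L10 s2 h2])
  also have "\<dots> = 5/2 * (d * (Nv * Nv)) + 4 * (K * (Nr * Nr)) + 12 * (d * (Nr * Nv)) + \<epsilon> * Nm * Nr"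
    by (simp add: algebra_simps)
  also have "\<dots> \<le> 15 * (d * (X * X)) + 4 * (K * (X * X)) + \<epsilon> * Nm * X"
  proof -
    have x: "Nv \<le> X" "Nr \<le> X" using XN N0 by auto
    have "Nv * Nv \<le> X * X" "Nr * Nr \<le> X * X" "Nr * Nv \<le> X * X"
      using x N0 by (auto intro!: mult_mono)
    then have "d * (Nv * Nv) \<le> d * (X * X)" "K * (Nr * Nr) \<le> K * (X * X)" "d * (Nr * Nv) \<le> d * (X * X)"
      using d0 K0 by (auto intro: mult_left_mono)
    moreover have "\<epsilon> * Nm * Nr \<le> \<epsilon> * Nm * X" using x e0 N0 by (intro mult_left_mono) auto
    moreover have "0 \<le> d * (X * X)" using d0 by simp
    ultimately show ?thesis by linarith
  qed
  also have "\<dots> = ((15 * d + 4 * K) * X + \<epsilon> * Nm) * X" by (simp add: algebra_simps)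
  finally show ?thesis unfolding pu hv X_def d_def K_def Nm_def by simp
qed

end


context setting
begin

lemma frechet:
  assumes p: "p \<in> Xsp \<beta> \<gamma>"
  shows "frechet_deriv_at (Xsp \<beta> \<gamma>) (Xnorm \<beta> \<gamma>) (Zsp \<alpha> \<beta>) (Znorm \<alpha> \<beta>) (Gmap f lam m0) (dGmap f p) p"
  unfolding frechet_deriv_at_def
proof (intro conjI dG_blb[OF p] allI impI)
  fix e :: real assume e: "0 < e"
  define Nm where "Nm = C2_norm \<gamma> (snd p)"
  define A where "A = 15 * real CARD('d) + 4 * K2 (Nm + 1)"
  have Nm0: "0 \<le> Nm" using X_parts(7)[OF p] Nm_def by simp
  have A0: "0 \<le> A" unfolding A_def using K2 by simp
  define \<epsilon> where "\<epsilon> = e / (2 * (Nm + 1))"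
  have eps: "0 < \<epsilon>" unfolding \<epsilon>_def using e Nm0 by simp
  obtain \<delta> where \<delta>: "\<delta> > 0" "\<delta> \<le> 1"
    "\<And>c s. \<bar>c\<bar> \<le> Nm \<Longrightarrow> \<bar>s\<bar> \<le> \<delta> \<Longrightarrow> \<bar>deriv (deriv f) (c + s) - deriv (deriv f) c\<bar> \<le> \<epsilon>"
    using unif_cont_interval[OF f_C2(2) eps, of Nm] by blast
  define r where "r = min \<delta> (e / (2 * (A + 1)))"
  have r0: "r > 0" unfolding r_def using \<delta> e A0 by simp
  show "\<exists>r>0. \<forall>h\<in>Xsp \<beta> \<gamma>. Xnorm \<beta> \<gamma> h < r \<longrightarrow>
         Znorm \<alpha> \<beta> (psub (psub (Gmap f lam m0 (padd p h)) (Gmap f lam m0 p)) (dGmap f p h)) \<le> e * Xnorm \<beta> \<gamma> h"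
  proof (intro exI[of _ r] conjI r0 ballI impI)
    fix h :: "'d fpair" assume h: "h \<in> Xsp \<beta> \<gamma>" and hr: "Xnorm \<beta> \<gamma> h < r"
    define X where "X = Xnorm \<beta> \<gamma> h"
    have XN: "X = C2_norm \<beta> (fst h) + C2_norm \<gamma> (snd h)" using X_parts(5)[OF h] X_def by simp
    have Nr: "C2_norm \<gamma> (snd h) \<le> X" "0 \<le> X" using XN X_parts(6,7)[OF h] by auto
    have Xr: "X < r" using hr X_def by simp
    have Nr1: "C2_norm \<gamma> (snd h) \<le> 1" using Nr Xr \<delta> unfolding r_def by simp
    have W: "\<bar>deriv (deriv f) (c + s) - deriv (deriv f) c\<bar> \<le> \<epsilon>"
      if "\<bar>c\<bar> \<le> C2_norm \<gamma> (snd p)" "\<bar>s\<bar> \<le> C2_norm \<gamma> (snd h)" for c s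
      using \<delta>(3)[of c s] that Nr Xr unfolding r_def Nm_def by simp
    have "Znorm \<alpha> \<beta> (psub (psub (Gmap f lam m0 (padd p h)) (Gmap f lam m0 p)) (dGmap f p h))
        \<le> (A * X + \<epsilon> * Nm) * X"
      unfolding rem_eq[OF p h] A_def X_def Nm_def
      by (rule rem_bound[OF p h Nr1 W]) (use eps in auto)
    also have "\<dots> \<le> e * X"
    proof (rule mult_right_mono[OF _ Nr(2)])
      have "A * X \<le> A * (e / (2 * (A + 1)))" using Xr A0 unfolding r_def by (intro mult_left_mono) auto
      also have "\<dots> \<le> e / 2" using A0 e by (simp add: field_simps)
      finally have 1: "A * X \<le> e / 2" .
      have "\<epsilon> * Nm = e / 2 * (Nm / (Nm + 1))" unfolding \<epsilon>_def using Nm0 by (simp add: field_simps)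
      also have "\<dots> \<le> e / 2 * 1" using Nm0 e by (intro mult_left_mono) auto
      finally have 2: "\<epsilon> * Nm \<le> e / 2" by simp
      show "A * X + \<epsilon> * Nm \<le> e" using 1 2 by linarith
    qed
    finally show "Znorm \<alpha> \<beta> (psub (psub (Gmap f lam m0 (padd p h)) (Gmap f lam m0 p)) (dGmap f p h)) \<le> e * Xnorm \<beta> \<gamma> h"
      unfolding X_def .
  qed
qed

end


context fset
begin

lemma dGdiff_eq:
  fixes y z h :: "('d::finite) fpair"
  assumes y: "y \<in> Xsp \<beta> \<gamma>" and z: "z \<in> Xsp \<beta> \<gamma>" and h: "h \<in> Xsp \<beta> \<gamma>"
  shows "psub (dGmap f y h) (dGmap f z h) =
    ((\<lambda>x. IP (fst (psub y z)) (fst h) x - (deriv f (snd z x + snd (psub y z) x) - deriv f (snd z x)) * snd h x),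
     (\<lambda>x. - Dt (snd h) (fst (psub y z)) x - Dt (snd (psub y z)) (fst h) x))"
proof -
  note Y = X_parts[OF y] and Z = X_parts[OF z] and Hh = X_parts[OF h]
  have d1: "\<And>x. fst y differentiable (at x)" "\<And>x. fst z differentiable (at x)"
    using Y(3) Z(3) tw_d1 by auto
  show ?thesis unfolding dG_eq[OF y h] dG_eq[OF z h] psub_def fst_conv snd_conv
    by (simp add: fun_eq_iff IP_diff1 d1 Dt_diff1 Dt_diff2 Y(3,4) Z(3,4) algebra_simps)
qed

lemma dGdiff_bound:
  fixes y z h :: "('d::finite) fpair"
  assumes y: "y \<in> Xsp \<beta> \<gamma>" and z: "z \<in> Xsp \<beta> \<gamma>" and h: "h \<in> Xsp \<beta> \<gamma>"
    and mz: "sbd (snd z) Rm" "lip (snd z) Lm" "0 \<le> Lm"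
    and S: "sbd (snd (psub y z)) S" "S \<le> C2_norm \<gamma> (snd (psub y z))"
    and K: "\<And>t. \<bar>t\<bar> \<le> Rm + S \<Longrightarrow> \<bar>deriv (deriv f) t\<bar> \<le> K" "0 \<le> K"
    and W: "\<And>c s. \<bar>c\<bar> \<le> Rm \<Longrightarrow> \<bar>s\<bar> \<le> S \<Longrightarrow> \<bar>deriv (deriv f) (c + s) - deriv (deriv f) c\<bar> \<le> \<omega>" "0 \<le> \<omega>"
  shows "Znorm \<alpha> \<beta> (psub (dGmap f y h) (dGmap f z h))
     \<le> ((29 * real CARD('d) + 5 * K) * Xnorm \<beta> \<gamma> (psub y z) + \<omega> * Lm) * Xnorm \<beta> \<gamma> h"
proof -
  have yz: "psub y z \<in> Xsp \<beta> \<gamma>" by (rule X_sub[OF y z])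
  obtain w \<mu> where wm: "psub y z = (w, \<mu>)" by (cases "psub y z")
  obtain v r where hv: "h = (v, r)" by (cases h)
  have w: "w \<in> C2 \<beta>" and mu: "\<mu> \<in> C2 \<gamma>" using X_parts[OF yz] wm by auto
  have v: "v \<in> C2 \<beta>" and r: "r \<in> C2 \<gamma>" using X_parts[OF h] hv by auto
  interpret Ww: c2fn w \<beta> by (unfold_locales, rule w)
  interpret Mu: c2fn \<mu> \<gamma> by (unfold_locales, rule mu)
  interpret V: c2fn v \<beta> by (unfold_locales, rule v)
  interpret R: c2fn r \<gamma> by (unfold_locales, rule r)
  define Nw where "Nw = C2_norm \<beta> w"
  define Nmu where "Nmu = C2_norm \<gamma> \<mu>"
  define Nv where "Nv = C2_norm \<beta> v"
  define Nr where "Nr = C2_norm \<gamma> r"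
  define d where "d = real CARD('d)"
  define P where "P = Xnorm \<beta> \<gamma> (psub y z)"
  define Q where "Q = Xnorm \<beta> \<gamma> h"
  have NN: "Nw = Ww.N" "Nmu = Mu.N" "Nv = V.N" "Nr = R.N"
    unfolding Nw_def Nmu_def Nv_def Nr_def Ww.N_def Mu.N_def V.N_def R.N_def by simp_all
  have N0: "0 \<le> Nw" "0 \<le> Nmu" "0 \<le> Nv" "0 \<le> Nr" unfolding NN using Ww.N0 Mu.N0 V.N0 R.N0 by auto
  have PN: "P = Nw + Nmu" unfolding P_def Xnorm_def wm Nw_def Nmu_def by simp
  have QN: "Q = Nv + Nr" unfolding Q_def Xnorm_def hv Nv_def Nr_def by simp
  have d0: "0 \<le> d" unfolding d_def by simp
  have S': "sbd \<mu> S" "S \<le> Nmu" using S wm Nmu_def by auto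
  have S0: "0 \<le> S" using sbd_nonneg[OF S'(1)] .
  have eq: "psub (dGmap f y h) (dGmap f z h) =
    ((\<lambda>x. IP w v x - (deriv f (snd z x + \<mu> x) - deriv f (snd z x)) * r x),
     (\<lambda>x. - Dt r w x - Dt \<mu> v x))"
    using dGdiff_eq[OF y z h] wm hv by simp
  have sIP: "sbd (IP w v) (d * (Nw * Nv))" using IP_bounds(1)[OF w v] unfolding d_def Nw_def Nv_def .
  have lIP: "lip (IP w v) (d * (2 * Nw * Nv))" using IP_bounds(2)[OF w v] unfolding d_def Nw_def Nv_def .
  have sphi: "sbd (\<lambda>x. deriv f (snd z x + \<mu> x) - deriv f (snd z x)) (K * S)"
    by (rule ff.phi2_fun(1)[OF mz(1,2) S'(1) Mu.lip_u K W])
  have lphi: "lip (\<lambda>x. deriv f (snd z x + \<mu> x) - deriv f (snd z x)) (\<omega> * Lm + K * Nmu)"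
    using ff.phi2_fun(2)[OF mz(1,2) S'(1) Mu.lip_u K W] unfolding NN .
  have s1: "sbd (\<lambda>x. IP w v x - (deriv f (snd z x + \<mu> x) - deriv f (snd z x)) * r x) (d * (Nw * Nv) + K * S * Nr)"
    using sbd_diff[OF sIP sbd_mult[OF sphi R.sbd_u]] NN by simp
  have l1: "lip (\<lambda>x. IP w v x - (deriv f (snd z x + \<mu> x) - deriv f (snd z x)) * r x)
     (d * (2 * Nw * Nv) + (K * S * Nr + Nr * (\<omega> * Lm + K * Nmu)))"
    using lip_diff[OF lIP lip_mult[OF sphi lphi R.sbd_u R.lip_u]] NN by simp
  have L10: "0 \<le> d * (2 * Nw * Nv) + (K * S * Nr + Nr * (\<omega> * Lm + K * Nmu))"
    using N0 d0 K(2) W(2) S0 mz(3) by simp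
  have s2: "sbd (\<lambda>x. - Dt r w x - Dt \<mu> v x) (d * (2 * Nr * Nw) + d * (2 * Nmu * Nv))"
    using sbd_diff[OF sbd_neg[OF Dt_bounds(1)[OF r w beta0 _ beta1]] Dt_bounds(1)[OF mu v beta0 _ beta1]]
    unfolding d_def Nw_def Nmu_def Nv_def Nr_def by simp
  have h2: "hol \<beta> (\<lambda>x. - Dt r w x - Dt \<mu> v x) (d * (10 * Nr * Nw) + d * (10 * Nmu * Nv))"
    using hol_diff[OF hol_neg[OF Dt_bounds(2)[OF r w beta0 _ beta1]] Dt_bounds(2)[OF mu v beta0 _ beta1]]
    unfolding d_def Nw_def Nmu_def Nv_def Nr_def by simp
  have "Znorm \<alpha> \<beta> (psub (dGmap f y h) (dGmap f z h))
     \<le> 3 * (d * (Nw * Nv) + K * S * Nr) + (d * (2 * Nw * Nv) + (K * S * Nr + Nr * (\<omega> * Lm + K * Nmu)))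
       + (d * (2 * Nr * Nw) + d * (2 * Nmu * Nv)) + (d * (10 * Nr * Nw) + d * (10 * Nmu * Nv))"
    unfolding eq by (rule Z_bound[OF alpha(1) alpha1 s1 l1 L10 s2 h2])
  also have "\<dots> = 5 * (d * (Nw * Nv)) + 4 * (K * (S * Nr)) + \<omega> * Lm * Nr + K * (Nmu * Nr)
       + 12 * (d * (Nr * Nw)) + 12 * (d * (Nmu * Nv))"
    by (simp add: algebra_simps)
  also have "\<dots> \<le> 29 * (d * (P * Q)) + 5 * (K * (P * Q)) + \<omega> * Lm * Q"
  proof -
    have x: "Nw \<le> P" "Nmu \<le> P" "S \<le> P" "Nv \<le> Q" "Nr \<le> Q" using PN QN N0 S' by auto
    have "Nw * Nv \<le> P * Q" "S * Nr \<le> P * Q" "Nmu * Nr \<le> P * Q" "Nr * Nw \<le> P * Q" "Nmu * Nv \<le> P * Q"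
      using x N0 S0 by (auto intro!: mult_mono simp: mult.commute[of Nr])
    then have "d * (Nw * Nv) \<le> d * (P * Q)" "K * (S * Nr) \<le> K * (P * Q)" "K * (Nmu * Nr) \<le> K * (P * Q)"
      "d * (Nr * Nw) \<le> d * (P * Q)" "d * (Nmu * Nv) \<le> d * (P * Q)"
      using d0 K(2) by (auto intro: mult_left_mono)
    moreover have "\<omega> * Lm * Nr \<le> \<omega> * Lm * Q" using x W(2) mz(3) by (intro mult_left_mono) auto
    ultimately show ?thesis by linarith
  qed
  also have "\<dots> = ((29 * d + 5 * K) * P + \<omega> * Lm) * Q" by (simp add: algebra_simps)
  finally show ?thesis unfolding P_def Q_def d_def .
qed

end


lemma c2_sbd_lip: "q \<in> C2 c \<Longrightarrow> sbd q (C2_norm c q) \<and> lip q (C2_norm c q)"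
  using c2fn.sbd_u[OF c2fn.intro] c2fn.lip_u[OF c2fn.intro] c2fn.N_def[OF c2fn.intro] by metis

context fset
begin

lemma dG_cont:
  "deriv_continuous (Xsp \<beta> \<gamma>) (Xnorm \<beta> \<gamma>) (Znorm \<alpha> \<beta>) (dGmap f :: ('d::finite) fpair \<Rightarrow> _)"
  unfolding deriv_continuous_def
proof (intro ballI allI impI)
  fix x :: "'d fpair" and e :: real assume x: "x \<in> Xsp \<beta> \<gamma>" and e: "0 < e"
  define Nm where "Nm = C2_norm \<gamma> (snd x)"
  define K where "K = K2 (Nm + 1)"
  define B where "B = 29 * real CARD('d) + 5 * K"
  have Nm0: "0 \<le> Nm" using X_parts(7)[OF x] Nm_def by simp
  have K0: "0 \<le> K" unfolding K_def using K2 by simp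
  have B0: "0 \<le> B" unfolding B_def using K0 by simp
  have mx: "sbd (snd x) Nm" "lip (snd x) Nm" using c2_sbd_lip[OF X_parts(2)[OF x]] Nm_def by auto
  define \<epsilon> where "\<epsilon> = e / (2 * (Nm + 1))"
  have eps: "0 < \<epsilon>" unfolding \<epsilon>_def using e Nm0 by simp
  obtain \<delta> where \<delta>: "\<delta> > 0" "\<delta> \<le> 1"
    "\<And>c s. \<bar>c\<bar> \<le> Nm \<Longrightarrow> \<bar>s\<bar> \<le> \<delta> \<Longrightarrow> \<bar>deriv (deriv f) (c + s) - deriv (deriv f) c\<bar> \<le> \<epsilon>"
    using unif_cont_interval[OF f_C2(2) eps, of Nm] by blast
  define r where "r = min \<delta> (e / (2 * (B + 1)))"
  have r0: "r > 0" unfolding r_def using \<delta> e B0 by simp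
  show "\<exists>r>0. \<forall>y\<in>Xsp \<beta> \<gamma>. Xnorm \<beta> \<gamma> (psub y x) < r \<longrightarrow>
           (\<forall>h\<in>Xsp \<beta> \<gamma>. Znorm \<alpha> \<beta> (psub (dGmap f y h) (dGmap f x h)) \<le> e * Xnorm \<beta> \<gamma> h)"
  proof (intro exI[of _ r] conjI r0 ballI impI)
    fix y h :: "'d fpair" assume y: "y \<in> Xsp \<beta> \<gamma>" and yr: "Xnorm \<beta> \<gamma> (psub y x) < r" and h: "h \<in> Xsp \<beta> \<gamma>"
    have yx: "psub y x \<in> Xsp \<beta> \<gamma>" by (rule X_sub[OF y x])
    define P where "P = Xnorm \<beta> \<gamma> (psub y x)"
    define S where "S = C2_norm \<gamma> (snd (psub y x))"
    have SP: "S \<le> P" "0 \<le> S" using X_parts(5,6,7)[OF yx] unfolding S_def P_def by auto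
    have Pr: "P < r" using yr P_def by simp
    have sS: "sbd (snd (psub y x)) S" using c2_sbd_lip[OF X_parts(2)[OF yx]] S_def by auto
    have S1: "S \<le> 1" "S \<le> \<delta>" using SP Pr \<delta> unfolding r_def by auto
    have Q0: "0 \<le> Xnorm \<beta> \<gamma> h" using X_parts(5,6,7)[OF h] by simp
    have "Znorm \<alpha> \<beta> (psub (dGmap f y h) (dGmap f x h)) \<le> (B * P + \<epsilon> * Nm) * Xnorm \<beta> \<gamma> h"
      unfolding B_def P_def
    proof (rule dGdiff_bound[OF y x h mx Nm0 sS _ _ K0 _ less_imp_le[OF eps]])
      show "S \<le> C2_norm \<gamma> (snd (psub y x))" unfolding S_def ..
      show "\<bar>deriv (deriv f) t\<bar> \<le> K" if "\<bar>t\<bar> \<le> Nm + S" for t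
        unfolding K_def by (rule K2(2)) (use that S1 in linarith)
      show "\<bar>deriv (deriv f) (c + s) - deriv (deriv f) c\<bar> \<le> \<epsilon>" if "\<bar>c\<bar> \<le> Nm" "\<bar>s\<bar> \<le> S" for c s
        using \<delta>(3)[of c s] that S1 by simp
    qed
    also have "\<dots> \<le> e * Xnorm \<beta> \<gamma> h"
    proof (rule mult_right_mono[OF _ Q0])
      have "B * P \<le> B * (e / (2 * (B + 1)))" using Pr B0 SP unfolding r_def by (intro mult_left_mono) auto
      also have "\<dots> \<le> e / 2" using B0 e by (simp add: field_simps)
      finally have 1: "B * P \<le> e / 2" .
      have "\<epsilon> * Nm = e / 2 * (Nm / (Nm + 1))" unfolding \<epsilon>_def using Nm0 by (simp add: field_simps)
      also have "\<dots> \<le> e / 2 * 1" using Nm0 e by (intro mult_left_mono) auto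
      finally have 2: "\<epsilon> * Nm \<le> e / 2" by simp
      show "B * P + \<epsilon> * Nm \<le> e" using 1 2 by linarith
    qed
    finally show "Znorm \<alpha> \<beta> (psub (dGmap f y h) (dGmap f x h)) \<le> e * Xnorm \<beta> \<gamma> h" .
  qed
qed

end


context fset
begin

lemma dG_lip:
  assumes LL: "\<forall>B. bounded B \<longrightarrow> (\<exists>L. \<forall>x\<in>B. \<forall>y\<in>B.
              \<bar>deriv (deriv f) x - deriv (deriv f) y\<bar> \<le> L * \<bar>x - y\<bar>)"
  shows "deriv_locally_lipschitz (Xsp \<beta> \<gamma>) (Xnorm \<beta> \<gamma>) (Znorm \<alpha> \<beta>) (dGmap f :: ('d::finite) fpair \<Rightarrow> _)"
  unfolding deriv_locally_lipschitz_def
proof (intro ballI)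
  fix x :: "'d fpair" assume x: "x \<in> Xsp \<beta> \<gamma>"
  define Nm where "Nm = C2_norm \<gamma> (snd x)"
  have Nm0: "0 \<le> Nm" using X_parts(7)[OF x] Nm_def by simp
  obtain L0 where L0: "\<forall>a\<in>{-(Nm+3)..Nm+3}. \<forall>b\<in>{-(Nm+3)..Nm+3}.
      \<bar>deriv (deriv f) a - deriv (deriv f) b\<bar> \<le> L0 * \<bar>a - b\<bar>"
    using LL[rule_format, of "{-(Nm+3)..Nm+3}"] by auto
  define Lf where "Lf = max L0 0"
  have Lf0: "0 \<le> Lf" unfolding Lf_def by simp
  have Lf: "\<bar>deriv (deriv f) a - deriv (deriv f) b\<bar> \<le> Lf * \<bar>a - b\<bar>"
    if "\<bar>a\<bar> \<le> Nm + 3" "\<bar>b\<bar> \<le> Nm + 3" for a b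
  proof -
    have "\<bar>deriv (deriv f) a - deriv (deriv f) b\<bar> \<le> L0 * \<bar>a - b\<bar>" using L0 that by (auto simp: abs_le_iff)
    also have "\<dots> \<le> Lf * \<bar>a - b\<bar>" unfolding Lf_def by (intro mult_right_mono) auto
    finally show ?thesis .
  qed
  define K where "K = K2 (Nm + 3)"
  have K0: "0 \<le> K" unfolding K_def using K2 by simp
  define Kc where "Kc = 29 * real CARD('d) + 5 * K + Lf * (Nm + 1)"
  have mx: "sbd (snd x) Nm" "lip (snd x) Nm" using c2_sbd_lip[OF X_parts(2)[OF x]] Nm_def by auto
  have main: "Znorm \<alpha> \<beta> (psub (dGmap f y h) (dGmap f z h)) \<le> Kc * Xnorm \<beta> \<gamma> (psub y z) * Xnorm \<beta> \<gamma> h"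
    if y: "y \<in> Xsp \<beta> \<gamma>" and z: "z \<in> Xsp \<beta> \<gamma>"
      and yr: "Xnorm \<beta> \<gamma> (psub y x) < 1" and zr: "Xnorm \<beta> \<gamma> (psub z x) < 1" and h: "h \<in> Xsp \<beta> \<gamma>"
    for y z h :: "'d fpair"
  proof -
    have yx: "psub y x \<in> Xsp \<beta> \<gamma>" by (rule X_sub[OF y x])
    have zx: "psub z x \<in> Xsp \<beta> \<gamma>" by (rule X_sub[OF z x])
    have yz: "psub y z \<in> Xsp \<beta> \<gamma>" by (rule X_sub[OF y z])
    define P where "P = Xnorm \<beta> \<gamma> (psub y z)"
    define Nyz where "Nyz = C2_norm \<gamma> (snd (psub y z))"
    define Nyx where "Nyx = C2_norm \<gamma> (snd (psub y x))"
    define Nzx where "Nzx = C2_norm \<gamma> (snd (psub z x))"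
    have NP: "Nyz \<le> P" "0 \<le> Nyz" using X_parts(5,6,7)[OF yz] unfolding Nyz_def P_def by auto
    have Nyx1: "Nyx < 1" using X_parts(5,6)[OF yx] yr unfolding Nyx_def by simp
    have Nzx1: "Nzx < 1" using X_parts(5,6)[OF zx] zr unfolding Nzx_def by simp
    have syx: "sbd (snd (psub y x)) Nyx" using c2_sbd_lip[OF X_parts(2)[OF yx]] Nyx_def by auto
    have szx: "sbd (snd (psub z x)) Nzx" "lip (snd (psub z x)) Nzx"
      using c2_sbd_lip[OF X_parts(2)[OF zx]] Nzx_def by auto
    have syz: "sbd (snd (psub y z)) Nyz" using c2_sbd_lip[OF X_parts(2)[OF yz]] Nyz_def by auto
    have ez: "snd z = (\<lambda>p. snd x p + snd (psub z x) p)" unfolding psub_def by simp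
    have mz: "sbd (snd z) (Nm + 1)" "lip (snd z) (Nm + 1)"
    proof -
      show "sbd (snd z) (Nm + 1)" unfolding ez
        by (rule sbd_mono[OF sbd_add[OF mx(1) szx(1)]]) (use Nzx1 in simp)
      show "lip (snd z) (Nm + 1)" unfolding ez
        by (rule lip_mono[OF lip_add[OF mx(2) szx(2)]]) (use Nzx1 in simp)
    qed
    define S where "S = min 2 Nyz"
    have S: "S \<le> 2" "S \<le> Nyz" "0 \<le> S" unfolding S_def using NP by auto
    have sS: "sbd (snd (psub y z)) S" unfolding sbd_def
    proof
      fix p
      have "\<bar>snd (psub y z) p\<bar> \<le> Nyz" using syz unfolding sbd_def by blast
      moreover have "snd (psub y z) p = snd (psub y x) p - snd (psub z x) p" unfolding psub_def by simp
      then have "\<bar>snd (psub y z) p\<bar> \<le> 2" using syx szx(1) Nyx1 Nzx1 unfolding sbd_def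
        by (smt (verit))
      ultimately show "\<bar>snd (psub y z) p\<bar> \<le> S" unfolding S_def by simp
    qed
    have Q0: "0 \<le> Xnorm \<beta> \<gamma> h" using X_parts(5,6,7)[OF h] by simp
    have "Znorm \<alpha> \<beta> (psub (dGmap f y h) (dGmap f z h))
        \<le> ((29 * real CARD('d) + 5 * K) * P + (Lf * S) * (Nm + 1)) * Xnorm \<beta> \<gamma> h"
      unfolding P_def
    proof (rule dGdiff_bound[OF y z h mz _ sS _ _ K0])
      show "0 \<le> Nm + 1" using Nm0 by simp
      show "S \<le> C2_norm \<gamma> (snd (psub y z))" using S Nyz_def by simp
      show "\<bar>deriv (deriv f) t\<bar> \<le> K" if "\<bar>t\<bar> \<le> Nm + 1 + S" for t
        unfolding K_def by (rule K2(2)) (use that S in linarith)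
      show "\<bar>deriv (deriv f) (c + s) - deriv (deriv f) c\<bar> \<le> Lf * S" if "\<bar>c\<bar> \<le> Nm + 1" "\<bar>s\<bar> \<le> S" for c s
      proof -
        have "\<bar>deriv (deriv f) (c + s) - deriv (deriv f) c\<bar> \<le> Lf * \<bar>(c + s) - c\<bar>"
          by (rule Lf) (use that S in \<open>auto simp: abs_le_iff\<close>)
        also have "\<dots> \<le> Lf * S" using that Lf0 by (simp add: mult_left_mono)
        finally show ?thesis .
      qed
      show "0 \<le> Lf * S" using Lf0 S by simp
    qed
    also have "\<dots> \<le> Kc * P * Xnorm \<beta> \<gamma> h"
    proof (rule mult_right_mono[OF _ Q0])
      have "(Lf * S) * (Nm + 1) \<le> (Lf * P) * (Nm + 1)"
        using S NP Lf0 Nm0 by (intro mult_right_mono mult_left_mono) auto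
      then show "(29 * real CARD('d) + 5 * K) * P + Lf * S * (Nm + 1) \<le> Kc * P"
        unfolding Kc_def by (simp add: algebra_simps)
    qed
    finally show ?thesis unfolding P_def .
  qed
  show "\<exists>r>0. \<exists>K. \<forall>y\<in>Xsp \<beta> \<gamma>. \<forall>z\<in>Xsp \<beta> \<gamma>. Xnorm \<beta> \<gamma> (psub y x) < r \<longrightarrow> Xnorm \<beta> \<gamma> (psub z x) < r \<longrightarrow>
        (\<forall>h\<in>Xsp \<beta> \<gamma>. Znorm \<alpha> \<beta> (psub (dGmap f y h) (dGmap f z h)) \<le> K * Xnorm \<beta> \<gamma> (psub y z) * Xnorm \<beta> \<gamma> h)"
    by (intro exI[of _ 1] conjI zero_less_one exI[of _ Kc] ballI impI) (simp add: main)
qed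

end


theorem lemma4p2:
  fixes f :: "real \<Rightarrow> real" and lam \<alpha> \<beta> \<gamma> :: real
    and m0 :: "real^('d::finite) \<Rightarrow> real"
  assumes lam: "lam > 0"
    and alpha: "0 < \<alpha>" "\<alpha> < 1"
    and m0: "m0 \<in> C0 \<alpha>" "\<forall>x. m0 x \<ge> 0" "integral (cbox 0 1) m0 = 1"
    and f_diff: "\<forall>x. f differentiable (at x)"
    and f_bdd: "bounded (range f)" "bounded (range (deriv f))"
    and f_C2: "\<forall>x. deriv f differentiable (at x)" "continuous_on UNIV (deriv (deriv f))"
    and exps: "0 < \<gamma>" "\<gamma> \<le> \<beta>" "\<beta> \<le> \<alpha>"
  shows "(\<forall>p\<in>Xsp \<beta> \<gamma>. Gmap f lam m0 p \<in> (Zsp \<alpha> \<beta> :: 'd fpair set))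
       \<and> (\<forall>p\<in>Xsp \<beta> \<gamma>. frechet_deriv_at (Xsp \<beta> \<gamma>) (Xnorm \<beta> \<gamma>) (Zsp \<alpha> \<beta>) (Znorm \<alpha> \<beta>)
                          (Gmap f lam m0) (dGmap f p) p)
       \<and> deriv_continuous (Xsp \<beta> \<gamma>) (Xnorm \<beta> \<gamma>) (Znorm \<alpha> \<beta>) (dGmap f)
       \<and> ((\<forall>B. bounded B \<longrightarrow> (\<exists>L. \<forall>x\<in>B. \<forall>y\<in>B.
              \<bar>deriv (deriv f) x - deriv (deriv f) y\<bar> \<le> L * \<bar>x - y\<bar>))
          \<longrightarrow> deriv_locally_lipschitz (Xsp \<beta> \<gamma>) (Xnorm \<beta> \<gamma>) (Znorm \<alpha> \<beta>) (dGmap f))"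
proof -
  interpret S: setting f \<alpha> \<beta> \<gamma> lam m0
    by unfold_locales (use alpha m0(1) f_diff f_bdd f_C2 exps in auto)
  show ?thesis using S.G_in_Z S.frechet S.dG_cont S.dG_lip by blast
qed


end
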